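(* Let $q=2^h$. In ${\rm PG}(4,q)$ with homogeneous coordinates $(X_1,\dots,X_5)$ let $\pi$ be the plane $X_4=X_5=0$, $\ell$ the line $X_1=X_4=X_5=0$, $\Sigma$ the solid $X_1=0$, $N=(1,0,0,0,0)$, $\mathcal H$ the hyperbolic quadric of $\Sigma$ with equation $X_2X_5+X_3X_4=0$ (and $X_1=0$), $\mathcal C$ the quadratic cone of ${\rm PG}(4,q)$ with equation $X_2X_5+X_3X_4=0$ (vertex $N$, base $\mathcal H$), and let $\mathcal Q_1,\dots,\mathcal Q_{q-1}$ be the $q-1$ parabolic quadrics $X_2X_5+X_3X_4+\lambda X_1^2=0$, $\lambda\in{\rm GF}(q)\setminus\{0\}$. Let $\alpha\in{\rm GF}(q)$ be such that $X^2+X+\alpha$ is irreducible over ${\rm GF}(q)$ and let $G=\{M_{a,b,c,d}: a\in{\rm GF}(q)\setminus\{0\},\ b,c,d\in{\rm GF}(q),\ c^2+cd+\alpha d^2=1\}$, where $$M_{a,b,c,d}=\begin{pmatrix}1&0&0&0&0\\0&ac&\alpha ad&bc&\alpha bd\\0&ad&a(c+d)&bd&b(c+d)\\0&0&0&a^{-1}c&\alpha a^{-1}d\\0&0&0&a^{-1}d&a^{-1}(c+d)\end{pmatrix},$$ acting on points (column vectors) by left multiplication. Then $G$ has exactly $q+5$ orbits on the points of ${\rm PG}(4,q)$: (a) $\{N\}$; (b) an orbit of size $q+1$ consisting of the points of $\ell$; (c) an orbit of size $q^2-1$ consisting of the points of $\pi\setminus(\ell\cup\{N\})$; (d) an orbit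 of size $q^2+q$ consisting of the points of $\mathcal H\setminus\ell$; (e) an orbit of size $q^3-q$ consisting of the points of $\Sigma\setminus\mathcal H$; (f) an orbit of size $q^3-q$ consisting of the points of $\mathcal C\setminus(\pi\cup\mathcal H)$; (g) $q-1$ orbits of size $q^3-q$, namely the sets $\mathcal Q_i\setminus\mathcal H$, $1\le i\le q-1$. *)

theory Defs
  imports "HOL-Library.Cardinality" "HOL-Computational_Algebra.Polynomial" "HOL-Computational_Algebra.Polynomial_Factorial"
begin

text \<open>Vectors of GF(q)^5 are functions on nat, with coordinates X_1..X_5 at indices 1..5
  and value 0 elsewhere. 5x5 matrices are functions nat => nat => 'a (rows, columns 1..5).\<close>

definition vecs5 :: "(nat \<Rightarrow> 'a::zero) set" where
  "vecs5 = {v. \<forall>i. i \<notin> {1..5} \<longrightarrow> v i = 0}"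

definition proj_pt :: "(nat \<Rightarrow> 'a::field) \<Rightarrow> (nat \<Rightarrow> 'a) set" where
  "proj_pt v = {(\<lambda>i. c * v i) | c. c \<noteq> 0}"

definition pts_where :: "((nat \<Rightarrow> 'a::field) \<Rightarrow> bool) \<Rightarrow> (nat \<Rightarrow> 'a) set set" where
  "pts_where F = {proj_pt v | v. v \<in> vecs5 \<and> v \<noteq> (\<lambda>_. 0) \<and> F v}"

definition PG4 :: "(nat \<Rightarrow> 'a::field) set set" where
  "PG4 = pts_where (\<lambda>_. True)"

definition mat_vec :: "(nat \<Rightarrow> nat \<Rightarrow> 'a::field) \<Rightarrow> (nat \<Rightarrow> 'a) \<Rightarrow> (nat \<Rightarrow> 'a)" where
  "mat_vec M v = (\<lambda>i. if i \<in> {1..5} then (\<Sum>j=1..5. M i j * v j) else 0)"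

definition act :: "(nat \<Rightarrow> nat \<Rightarrow> 'a::field) \<Rightarrow> (nat \<Rightarrow> 'a) set \<Rightarrow> (nat \<Rightarrow> 'a) set" where
  "act M P = mat_vec M ` P"

definition orbit :: "(nat \<Rightarrow> nat \<Rightarrow> 'a::field) set \<Rightarrow> (nat \<Rightarrow> 'a) set \<Rightarrow> (nat \<Rightarrow> 'a) set set" where
  "orbit G P = {act M P | M. M \<in> G}"

definition orbits :: "(nat \<Rightarrow> nat \<Rightarrow> 'a::field) set \<Rightarrow> (nat \<Rightarrow> 'a) set set set" where
  "orbits G = {orbit G P | P. P \<in> PG4}"

definition Mabcd :: "'a::field \<Rightarrow> 'a \<Rightarrow> 'a \<Rightarrow> 'a \<Rightarrow> 'a \<Rightarrow> nat \<Rightarrow> nat \<Rightarrow> 'a" where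
  "Mabcd \<alpha> a b c d = (\<lambda>i j.
     [[1, 0, 0, 0, 0],
      [0, a*c, \<alpha>*a*d, b*c, \<alpha>*b*d],
      [0, a*d, a*(c+d), b*d, b*(c+d)],
      [0, 0, 0, inverse a * c, \<alpha> * inverse a * d],
      [0, 0, 0, inverse a * d, inverse a * (c+d)]] ! (i - 1) ! (j - 1))"

definition Ggrp :: "'a::field \<Rightarrow> (nat \<Rightarrow> nat \<Rightarrow> 'a) set" where
  "Ggrp \<alpha> = {Mabcd \<alpha> a b c d | a b c d. a \<noteq> 0 \<and> c^2 + c*d + \<alpha>*d^2 = 1}"

definition ptN :: "(nat \<Rightarrow> 'a::field) set" where
  "ptN = proj_pt (\<lambda>i. if i = 1 then 1 else 0)"

definition plane_pi :: "(nat \<Rightarrow> 'a::field) set set" where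
  "plane_pi = pts_where (\<lambda>x. x 4 = 0 \<and> x 5 = 0)"

definition line_l :: "(nat \<Rightarrow> 'a::field) set set" where
  "line_l = pts_where (\<lambda>x. x 1 = 0 \<and> x 4 = 0 \<and> x 5 = 0)"

definition solid_Sigma :: "(nat \<Rightarrow> 'a::field) set set" where
  "solid_Sigma = pts_where (\<lambda>x. x 1 = 0)"

definition quadric_H :: "(nat \<Rightarrow> 'a::field) set set" where
  "quadric_H = pts_where (\<lambda>x. x 1 = 0 \<and> x 2 * x 5 + x 3 * x 4 = 0)"

definition cone_C :: "(nat \<Rightarrow> 'a::field) set set" where
  "cone_C = pts_where (\<lambda>x. x 2 * x 5 + x 3 * x 4 = 0)"

definition quadric_Q :: "'a::field \<Rightarrow> (nat \<Rightarrow> 'a) set set" where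
  "quadric_Q lam = pts_where (\<lambda>x. x 2 * x 5 + x 3 * x 4 + lam * (x 1)^2 = 0)"

end

theory Submission imports Defs "HOL-Number_Theory.Residues" begin

definition vec5 :: "'a::zero \<Rightarrow> 'a \<Rightarrow> 'a \<Rightarrow> 'a \<Rightarrow> 'a \<Rightarrow> nat \<Rightarrow> 'a" where
  "vec5 x1 x2 x3 x4 x5 = (\<lambda>i. if i = 1 then x1 else if i = 2 then x2 else if i = 3 then x3
     else if i = 4 then x4 else if i = 5 then x5 else 0)"

lemma sum15: "(\<Sum>j::nat=1..5. f j) = f 1 + f 2 + f 3 + f 4 + (f 5::'a::comm_monoid_add)"
proof -
  have "{1..5::nat} = {1,2,3,4,5}" by auto
  thus ?thesis by (simp add: add.assoc)
qed

lemma mv_M: "mat_vec (Mabcd \<alpha> a b c d) v = vec5 (v 1)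
   (a*c*v 2 + \<alpha>*a*d*v 3 + b*c*v 4 + \<alpha>*b*d*v 5)
   (a*d*v 2 + a*(c+d)*v 3 + b*d*v 4 + b*(c+d)*v 5)
   (inverse a*c*v 4 + \<alpha>*inverse a*d*v 5)
   (inverse a*d*v 4 + inverse a*(c+d)*v 5)"
  unfolding mat_vec_def sum15 by (auto simp: vec5_def Mabcd_def fun_eq_iff)

lemma char2:
  assumes "CARD('a::{field,finite}) = 2^h"
  shows "(2::'a) = 0"
proof -
  have p: "prime CHAR('a)" by (rule prime_CHAR_semidom) (simp add: finite_imp_CHAR_pos)
  have "CHAR('a) dvd 2^h" using CHAR_dvd_CARD[where 'a='a] assms by simp
  hence "CHAR('a) dvd 2" using p prime_dvd_power by blast
  hence "CHAR('a) = 2" using p by (metis primes_dvd_imp_eq two_is_prime_nat)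
  thus ?thesis by (metis of_nat_CHAR of_nat_numeral)
qed

lemma vec5_at[simp]: "vec5 x1 x2 x3 x4 x5 1 = x1" "vec5 x1 x2 x3 x4 x5 2 = x2" "vec5 x1 x2 x3 x4 x5 3 = x3"
  "vec5 x1 x2 x3 x4 x5 4 = x4" "vec5 x1 x2 x3 x4 x5 5 = x5" "vec5 x1 x2 x3 x4 x5 (Suc 0) = x1"
  by (simp_all add: vec5_def)

lemma vec5_eq_iff: "vec5 x1 x2 x3 x4 x5 = vec5 y1 y2 y3 y4 y5 \<longleftrightarrow> x1=y1 \<and> x2=y2 \<and> x3=y3 \<and> x4=y4 \<and> x5=y5"
  (is "?L \<longleftrightarrow> ?R")
proof
  assume ?L
  hence "(\<lambda>f. (f 1, f 2, f 3, f 4, f (5::nat))) (vec5 x1 x2 x3 x4 x5) = (\<lambda>f. (f 1, f 2, f 3, f 4, f 5)) (vec5 y1 y2 y3 y4 y5)"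
    by simp
  thus ?R by (simp only: vec5_at prod.inject)
next
  assume ?R thus ?L by simp
qed

lemma mv_comp:
  fixes a :: "'a::field"
  assumes "a \<noteq> 0" "a' \<noteq> 0"
  shows "mat_vec (Mabcd \<alpha> a b c d) (mat_vec (Mabcd \<alpha> a' b' c' d') v) =
    mat_vec (Mabcd \<alpha> (a*a') (a*b' + b*inverse a') (c*c'+\<alpha>*d*d') (c*d'+d*c'+d*d')) v"
  unfolding mv_M vec5_at vec5_eq_iff inverse_mult_distrib
  using assms by (simp add: algebra_simps)

lemma Q_inv:
  fixes a :: "'a::field"
  assumes "a * ia = 1" "(2::'a) = 0" "c^2+c*d+\<alpha>*d^2 = 1"
  shows "(a*c*x2 + \<alpha>*a*d*x3 + b*c*x4 + \<alpha>*b*d*x5) * (ia*d*x4 + ia*(c+d)*x5) +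
         (a*d*x2 + a*(c+d)*x3 + b*d*x4 + b*(c+d)*x5) * (ia*c*x4 + \<alpha>*ia*d*x5) = x2*x5+x3*x4"
proof -
  have "(a*c*x2 + \<alpha>*a*d*x3 + b*c*x4 + \<alpha>*b*d*x5) * (ia*d*x4 + ia*(c+d)*x5) +
         (a*d*x2 + a*(c+d)*x3 + b*d*x4 + b*(c+d)*x5) * (ia*c*x4 + \<alpha>*ia*d*x5)
    = a*ia*((c^2+c*d+\<alpha>*d^2)*(x2*x5+x3*x4) + 2*(c*d*x2*x4 + \<alpha>*d*(c+d)*x3*x5))
      + 2*(b*ia*(c*x4 + \<alpha>*d*x5)*(d*x4 + (c+d)*x5))"
    by (simp add: algebra_simps power2_eq_square mult_2)
  thus ?thesis using assms by simp
qed

lemma norm_nz: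
  fixes \<alpha> :: "'a::field"
  assumes "irreducible [:\<alpha>, 1, 1:]" "x^2 + x*y + \<alpha>*y^2 = 0"
  shows "x = 0 \<and> y = 0"
proof (cases "y = 0")
  case True thus ?thesis using assms by simp
next
  case False
  define t where "t = x / y"
  have "t^2 + t + \<alpha> = 0" using assms(2) False unfolding t_def
    by (simp add: field_simps power2_eq_square)
  hence "poly [:\<alpha>, 1, 1:] t = 0" by (simp add: algebra_simps power2_eq_square)
  hence "[:-t, 1:] dvd [:\<alpha>, 1, 1:]" using poly_eq_0_iff_dvd by blast
  then obtain r where r: "[:\<alpha>, 1, 1:] = [:-t, 1:] * r" by (auto elim: dvdE)
  have "r \<noteq> 0" using r by auto
  have "degree [:\<alpha>, 1, 1:] = 2" by simp
  moreover have "degree ([:-t, 1:] * r) = degree [:-t, 1:] + degree r"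
    by (rule degree_mult_eq) (use \<open>r \<noteq> 0\<close> in auto)
  ultimately have dr: "degree r = 1" using r by simp
  have "is_unit [:-t, 1:] \<or> is_unit r" using assms(1) r irreducibleD by metis
  thus ?thesis using dr \<open>r \<noteq> 0\<close> by (auto simp: is_unit_iff_degree)
qed

lemma sqrt_ex:
  assumes "(2::'a::{field,finite}) = 0"
  shows "\<exists>y. y * y = (x::'a)"
proof -
  have "inj (\<lambda>y::'a. y * y)"
  proof (rule injI)
    fix y z :: 'a assume yz: "y * y = z * z"
    have "(y - z) * (y - z) = y*y + z*z - 2*(y*z)" by (simp add: algebra_simps mult_2)
    also have "\<dots> = 2 * (z * z)" using yz assms by (simp add: mult_2)
    finally have "(y - z) * (y - z) = 0" using assms by simp
    thus "y = z" by simp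
  qed
  hence "surj (\<lambda>y::'a. y * y)" using finite_UNIV_inj_surj[OF finite_class.finite_UNIV] by blast
  thus ?thesis by (metis surjD)
qed

lemma vec5_scale: "(\<lambda>i. (l::'a::mult_zero) * vec5 x1 x2 x3 x4 x5 i) = vec5 (l*x1) (l*x2) (l*x3) (l*x4) (l*x5)" 
  by (simp add: vec5_def fun_eq_iff)


lemma vecs5_vec5: "v \<in> vecs5 \<Longrightarrow> v = vec5 (v 1) (v 2) (v 3) (v 4) (v 5)"
  by (auto simp: vecs5_def vec5_def fun_eq_iff)
lemma vec5_in[simp]: "vec5 x1 x2 x3 x4 x5 \<in> vecs5" by (simp add: vecs5_def vec5_def)
lemma zero_vec5: "(\<lambda>_. 0) = vec5 0 0 0 0 0" by (simp add: vec5_def fun_eq_iff)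
lemma vec5_nz: "vec5 x1 x2 x3 x4 x5 = (\<lambda>_. 0) \<longleftrightarrow> x1 = 0 \<and> x2 = 0 \<and> x3 = 0 \<and> x4 = 0 \<and> x5 = 0"
  by (simp add: zero_vec5 vec5_eq_iff)
lemma mat_vec_in[simp]: "mat_vec M v \<in> vecs5" by (simp add: vecs5_def mat_vec_def)
lemma mat_vec_scale: "mat_vec M (\<lambda>i. c * v i) = (\<lambda>i. c * mat_vec M v i)"
  by (simp add: mat_vec_def fun_eq_iff sum_distrib_left algebra_simps)
lemma mat_vec_zero: "mat_vec M (\<lambda>_. 0) = (\<lambda>_. 0)"
  by (simp add: mat_vec_def fun_eq_iff)

lemma act_proj: "act M (proj_pt v) = proj_pt (mat_vec M v)"
proof -
  have "mat_vec M ` {(\<lambda>i. c * v i) | c. c \<noteq> 0} = {mat_vec M (\<lambda>i. c * v i) | c. c \<noteq> 0}" by blast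
  thus ?thesis unfolding act_def proj_pt_def by (simp add: mat_vec_scale)
qed

lemma proj_self: "v \<in> proj_pt v"
  using exI[of "\<lambda>c. v = (\<lambda>i. c * v i) \<and> c \<noteq> 0" 1] by (simp add: proj_pt_def)

lemma proj_eq: "proj_pt v = proj_pt w \<Longrightarrow> \<exists>c. c \<noteq> 0 \<and> w = (\<lambda>i. c * v i)"
proof -
  assume "proj_pt v = proj_pt w"
  hence "w \<in> proj_pt v" using proj_self by metis
  thus ?thesis unfolding proj_pt_def by auto
qed

lemma proj_scale: assumes "c \<noteq> 0" shows "proj_pt (\<lambda>i. c * v i) = proj_pt v"
proof -
  have "(\<exists>d. u = (\<lambda>i. d * (c * v i)) \<and> d \<noteq> 0) \<longleftrightarrow> (\<exists>e. u = (\<lambda>i. e * v i) \<and> e \<noteq> 0)" for u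
  proof
    assume "\<exists>d. u = (\<lambda>i. d * (c * v i)) \<and> d \<noteq> 0"
    then obtain d where "u = (\<lambda>i. d * (c * v i))" "d \<noteq> 0" by blast
    thus "\<exists>e. u = (\<lambda>i. e * v i) \<and> e \<noteq> 0" using assms by (intro exI[of _ "d*c"]) (auto simp: mult.assoc)
  next
    assume "\<exists>e. u = (\<lambda>i. e * v i) \<and> e \<noteq> 0"
    then obtain e where "u = (\<lambda>i. e * v i)" "e \<noteq> 0" by blast
    thus "\<exists>d. u = (\<lambda>i. d * (c * v i)) \<and> d \<noteq> 0" using assms by (intro exI[of _ "e/c"]) auto
  qed
  thus ?thesis unfolding proj_pt_def by auto
qed

definition hom :: "((nat \<Rightarrow> 'a::field) \<Rightarrow> bool) \<Rightarrow> bool" where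
  "hom F \<longleftrightarrow> (\<forall>v c. c \<noteq> 0 \<longrightarrow> F (\<lambda>i. c * v i) = F v)"

lemma mem_pts: assumes "hom F" "v \<in> vecs5" "v \<noteq> (\<lambda>_. 0)"
  shows "proj_pt v \<in> pts_where F \<longleftrightarrow> F v"
proof
  assume "proj_pt v \<in> pts_where F"
  then obtain w where w: "proj_pt v = proj_pt w" "F w" unfolding pts_where_def by auto
  then obtain c where "c \<noteq> 0" "v = (\<lambda>i. c * w i)" using proj_eq by metis
  thus "F v" using assms(1) w unfolding hom_def by auto
next
  assume "F v" thus "proj_pt v \<in> pts_where F" using assms unfolding pts_where_def by auto
qed

lemma pts_diff: assumes "hom G" shows "pts_where F - pts_where G = pts_where (\<lambda>x. F x \<and> \<not> G x)"
proof (rule equalityI; rule subsetI)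
  fix P assume "P \<in> pts_where F - pts_where G"
  then obtain v where v: "P = proj_pt v" "v \<in> vecs5" "v \<noteq> (\<lambda>_. 0)" "F v" and n: "P \<notin> pts_where G"
    unfolding pts_where_def by auto
  have "\<not> G v" using n v unfolding pts_where_def by auto
  thus "P \<in> pts_where (\<lambda>x. F x \<and> \<not> G x)" using v unfolding pts_where_def by auto
next
  fix P assume "P \<in> pts_where (\<lambda>x. F x \<and> \<not> G x)"
  then obtain v where v: "P = proj_pt v" "v \<in> vecs5" "v \<noteq> (\<lambda>_. 0)" "F v" "\<not> G v"
    unfolding pts_where_def by auto
  have "P \<notin> pts_where G" using mem_pts[OF assms v(2,3)] v by simp
  thus "P \<in> pts_where F - pts_where G" using v unfolding pts_where_def by auto
qed

lemma pts_union: "pts_where F \<union> pts_where G = pts_where (\<lambda>x. F x \<or> G x)"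
  unfolding pts_where_def by blast

lemma pts_cong: assumes "\<And>v. v \<in> vecs5 \<Longrightarrow> v \<noteq> (\<lambda>_. 0) \<Longrightarrow> F v = G v"
  shows "pts_where F = pts_where G"
  unfolding pts_where_def using assms by blast

lemma hom_or: "hom F \<Longrightarrow> hom G \<Longrightarrow> hom (\<lambda>x. F x \<or> G x)" by (simp add: hom_def)

lemma pts_neq: assumes "hom F" "hom G" "v \<in> vecs5" "v \<noteq> (\<lambda>_. 0)" "F v" "\<not> G v"
  shows "pts_where F \<noteq> pts_where G"
  using mem_pts[OF assms(1,3,4)] mem_pts[OF assms(2,3,4)] assms(5,6) by auto

definition z45 :: "(nat \<Rightarrow> 'a::zero) \<Rightarrow> bool" where "z45 x \<longleftrightarrow> x 4 = 0 \<and> x 5 = 0"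
definition z2345 :: "(nat \<Rightarrow> 'a::zero) \<Rightarrow> bool" where
  "z2345 x \<longleftrightarrow> x 2 = 0 \<and> x 3 = 0 \<and> x 4 = 0 \<and> x 5 = 0"
definition qf :: "(nat \<Rightarrow> 'a::comm_ring) \<Rightarrow> 'a" where "qf x = x 2 * x 5 + x 3 * x 4"

lemma z45_scale: "(c::'a::field) \<noteq> 0 \<Longrightarrow> z45 (\<lambda>i. c * v i) = z45 v" by (simp add: z45_def)
lemma z2345_scale: "(c::'a::field) \<noteq> 0 \<Longrightarrow> z2345 (\<lambda>i. c * v i) = z2345 v" by (simp add: z2345_def)
lemma qf_scale: "qf (\<lambda>i. (c::'a::field) * v i) = c * c * qf v" by (simp add: qf_def algebra_simps)

definition FN :: "(nat \<Rightarrow> 'a::field) \<Rightarrow> bool" where "FN x \<longleftrightarrow> z2345 x"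
definition Fl :: "(nat \<Rightarrow> 'a::field) \<Rightarrow> bool" where "Fl x \<longleftrightarrow> x 1 = 0 \<and> z45 x \<and> \<not> z2345 x"
definition Fpi :: "(nat \<Rightarrow> 'a::field) \<Rightarrow> bool" where "Fpi x \<longleftrightarrow> x 1 \<noteq> 0 \<and> z45 x \<and> \<not> z2345 x"
definition FH :: "(nat \<Rightarrow> 'a::field) \<Rightarrow> bool" where "FH x \<longleftrightarrow> x 1 = 0 \<and> qf x = 0 \<and> \<not> z45 x"
definition FS :: "(nat \<Rightarrow> 'a::field) \<Rightarrow> bool" where "FS x \<longleftrightarrow> x 1 = 0 \<and> qf x \<noteq> 0"
definition FC :: "(nat \<Rightarrow> 'a::field) \<Rightarrow> bool" where "FC x \<longleftrightarrow> x 1 \<noteq> 0 \<and> qf x = 0 \<and> \<not> z45 x"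
definition FQ :: "'a::field \<Rightarrow> (nat \<Rightarrow> 'a) \<Rightarrow> bool" where
  "FQ lam x \<longleftrightarrow> x 1 \<noteq> 0 \<and> qf x + lam * (x 1)^2 = 0"

lemmas Fdefs = FN_def Fl_def Fpi_def FH_def FS_def FC_def FQ_def

lemma hom_F: "hom FN" "hom Fl" "hom Fpi" "hom FH" "hom FS" "hom FC"
  by (simp_all add: hom_def Fdefs z45_scale z2345_scale qf_scale)

lemma hom_FQ: "hom (FQ lam)"
proof -
  have e: "c * c * q + lam * (c * y)^2 = c * c * (q + lam * y^2)" for c q y
    by (simp add: algebra_simps power2_eq_square)
  show "hom (FQ lam)" by (simp add: hom_def Fdefs qf_scale e)
qed

lemma norm_one: "t * t = p^2 + p*q + \<alpha>*q^2 \<Longrightarrow> (t::'a::field) \<noteq> 0 \<Longrightarrow>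
   (p/t)^2 + (p/t)*(q/t) + \<alpha>*(q/t)^2 = 1"
proof -
  assume a: "t * t = p^2 + p*q + \<alpha>*q^2" "t \<noteq> 0"
  have "(p/t)^2 + (p/t)*(q/t) + \<alpha>*(q/t)^2 = (p^2 + p*q + \<alpha>*q^2)/(t*t)"
    using a(2) by (simp add: field_simps power2_eq_square)
  also have "\<dots> = 1" using a by (metis divide_self mult_eq_0_iff)
  finally show ?thesis .
qed

lemma trans_Sigma:
  fixes \<alpha> :: "'a::{field,finite}"
  assumes two: "(2::'a) = 0" and irr: "irreducible [:\<alpha>, 1, 1:]" and q: "x2*x5+x3*x4 \<noteq> 0"
  shows "\<exists>a b c d. a \<noteq> 0 \<and> c^2+c*d+\<alpha>*d^2 = 1 \<and> (\<exists>l. l \<noteq> 0 \<and>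
     mat_vec (Mabcd \<alpha> a b c d) (vec5 0 0 1 1 0) = (\<lambda>i. l * vec5 0 x2 x3 x4 x5 i))"
proof -
  define R1 where "R1 = x2*(x4+x5) + \<alpha>*x3*x5"
  have "\<not> (x4 = 0 \<and> x5 = 0)" using q by auto
  hence nw0: "x4^2 + x4*x5 + \<alpha>*x5^2 \<noteq> 0" using norm_nz[OF irr] by blast
  obtain t where t: "t * t = x4^2 + x4*x5 + \<alpha>*x5^2" using sqrt_ex[OF two] by blast
  obtain sq where sq: "sq * sq = x2*x5+x3*x4" using sqrt_ex[OF two] by blast
  have t0: "t \<noteq> 0" using t nw0 by auto
  have sq0: "sq \<noteq> 0" using sq q by auto
  have c1: "\<alpha> * (sq*sq) * x5 + R1 * x4 = x2 * (t*t)"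
  proof -
    have "\<alpha> * (x2*x5+x3*x4) * x5 + R1 * x4 = x2 * (x4^2 + x4*x5 + \<alpha>*x5^2) + 2*(\<alpha>*x3*x4*x5)"
      unfolding R1_def by (simp add: algebra_simps power2_eq_square mult_2)
    thus ?thesis using t sq two by simp
  qed
  have c2: "(sq*sq) * (x4+x5) + R1 * x5 = x3 * (t*t)"
  proof -
    have "(x2*x5+x3*x4) * (x4+x5) + R1 * x5 = x3 * (x4^2 + x4*x5 + \<alpha>*x5^2) + 2*(x2*x4*x5 + x2*x5*x5)"
      unfolding R1_def by (simp add: algebra_simps power2_eq_square mult_2)
    thus ?thesis using t sq two by simp
  qed
  have E2: "\<alpha>*(sq/t)*(x5/t) + R1/(t*sq)*(x4/t) = inverse sq * x2"
  proof -
    have "\<alpha>*(sq/t)*(x5/t) + R1/(t*sq)*(x4/t) = (\<alpha> * (sq*sq) * x5 + R1 * x4)/(t*t*sq)"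
      using t0 sq0 by (simp add: field_simps)
    also have "\<dots> = x2 * (t*t)/(t*t*sq)" using c1 by simp
    also have "\<dots> = inverse sq * x2" using t0 sq0 by (simp add: field_simps)
    finally show ?thesis .
  qed
  have E3: "(sq/t)*((x4/t)+(x5/t)) + R1/(t*sq)*(x5/t) = inverse sq * x3"
  proof -
    have "(sq/t)*((x4/t)+(x5/t)) + R1/(t*sq)*(x5/t) = ((sq*sq) * (x4+x5) + R1 * x5)/(t*t*sq)"
      using t0 sq0 by (simp add: field_simps)
    also have "\<dots> = x3 * (t*t)/(t*t*sq)" using c2 by simp
    also have "\<dots> = inverse sq * x3" using t0 sq0 by (simp add: field_simps)
    finally show ?thesis .
  qed
  have E4: "inverse (sq/t) * (x4/t) = inverse sq * x4" "inverse (sq/t) * (x5/t) = inverse sq * x5"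
    using t0 sq0 by (simp_all add: field_simps)
  show ?thesis
  proof (intro exI conjI)
    show "sq/t \<noteq> 0" using t0 sq0 by simp
    show "(x4/t)^2 + (x4/t)*(x5/t) + \<alpha>*(x5/t)^2 = 1" using norm_one[OF t t0] .
    show "inverse sq \<noteq> 0" using sq0 by simp
    show "mat_vec (Mabcd \<alpha> (sq/t) (R1/(t*sq)) (x4/t) (x5/t)) (vec5 0 0 1 1 0) =
      (\<lambda>i. inverse sq * vec5 0 x2 x3 x4 x5 i)"
      unfolding mv_M vec5_at vec5_scale vec5_eq_iff
      using E2 E3 E4 by simp
  qed
qed

lemma G_intro: "a \<noteq> 0 \<Longrightarrow> c^2+c*d+\<alpha>*d^2 = 1 \<Longrightarrow> Mabcd \<alpha> a b c d \<in> Ggrp \<alpha>"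
  unfolding Ggrp_def by blast

lemma G_elim: "M \<in> Ggrp \<alpha> \<Longrightarrow> (\<And>a b c d. M = Mabcd \<alpha> a b c d \<Longrightarrow> a \<noteq> 0 \<Longrightarrow> c^2+c*d+\<alpha>*d^2 = 1 \<Longrightarrow> thesis) \<Longrightarrow> thesis"
  unfolding Ggrp_def by blast

lemma norm_mult:
  fixes c :: "'a::field"
  assumes two: "(2::'a) = 0" and "c^2+c*d+\<alpha>*d^2 = 1" "c'^2+c'*d'+\<alpha>*d'^2 = 1"
  shows "(c*c'+\<alpha>*d*d')^2 + (c*c'+\<alpha>*d*d')*(c*d'+d*c'+d*d') + \<alpha>*(c*d'+d*c'+d*d')^2 = 1"
proof -
  let ?N = "c^2+c*d+\<alpha>*d^2" and ?N' = "c'^2+c'*d'+\<alpha>*d'^2"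
  have "(c*c'+\<alpha>*d*d')^2 + (c*c'+\<alpha>*d*d')*(c*d'+d*c'+d*d') + \<alpha>*(c*d'+d*c'+d*d')^2
     = ?N * ?N' + 2*(- \<alpha>*d^2*?N' - \<alpha>*d'^2*?N + 2*\<alpha>^2*d^2*d'^2 + \<alpha>*(c*d'+d*c'+d*d')^2)"
    by (simp add: algebra_simps power2_eq_square mult_2)
  thus ?thesis using assms by simp
qed

lemma G_comp:
  fixes \<alpha> :: "'a::field"
  assumes two: "(2::'a) = 0" and "M \<in> Ggrp \<alpha>" "M' \<in> Ggrp \<alpha>"
  shows "\<exists>M''\<in>Ggrp \<alpha>. \<forall>v. mat_vec M (mat_vec M' v) = mat_vec M'' v"
proof -
  obtain a b c d where M: "M = Mabcd \<alpha> a b c d" "a \<noteq> 0" "c^2+c*d+\<alpha>*d^2 = 1" using G_elim[OF assms(2)] by metis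
  obtain a' b' c' d' where M': "M' = Mabcd \<alpha> a' b' c' d'" "a' \<noteq> 0" "c'^2+c'*d'+\<alpha>*d'^2 = 1" using G_elim[OF assms(3)] by metis
  show ?thesis
    apply (rule bexI[of _ "Mabcd \<alpha> (a*a') (a*b' + b*inverse a') (c*c'+\<alpha>*d*d') (c*d'+d*c'+d*d')"])
    using M M' mv_comp[of a a'] apply simp
    using M M' norm_mult[OF two] by (intro G_intro) auto
qed

lemma mv_id: "v \<in> vecs5 \<Longrightarrow> mat_vec (Mabcd \<alpha> 1 0 1 0) v = v"
  unfolding mv_M by (subst (2) vecs5_vec5) (simp_all)

lemma G_inv:
  fixes \<alpha> :: "'a::field"
  assumes two: "(2::'a) = 0" and "M \<in> Ggrp \<alpha>"
  shows "\<exists>M'\<in>Ggrp \<alpha>. \<forall>v\<in>vecs5. mat_vec M' (mat_vec M v) = v"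
proof -
  obtain a b c d where M: "M = Mabcd \<alpha> a b c d" "a \<noteq> 0" "c^2+c*d+\<alpha>*d^2 = 1" using G_elim[OF assms(2)] by metis
  have n: "(c+d)^2+(c+d)*d+\<alpha>*d^2 = 1"
  proof -
    have "(c+d)^2+(c+d)*d+\<alpha>*d^2 = (c^2+c*d+\<alpha>*d^2) + 2*(c*d+d*d)"
      by (simp add: algebra_simps power2_eq_square mult_2)
    thus ?thesis using M two by simp
  qed
  have p: "inverse a * a = 1" "inverse a * b + (-b) * inverse a = 0" "(c+d)*c+\<alpha>*d*d = 1"
    "(c+d)*d+d*c+d*d = 0"
  proof -
    show "inverse a * a = 1" using M by simp
    show "inverse a * b + (-b) * inverse a = 0" by simp
    show "(c+d)*c+\<alpha>*d*d = 1" using M(3) by (simp add: algebra_simps power2_eq_square)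
    have "(c+d)*d+d*c+d*d = 2*(c*d+d*d)" by (simp add: algebra_simps mult_2)
    thus "(c+d)*d+d*c+d*d = 0" using two by simp
  qed
  show ?thesis
  proof (intro bexI ballI)
    show "Mabcd \<alpha> (inverse a) (-b) (c+d) d \<in> Ggrp \<alpha>" using M n by (intro G_intro) auto
    fix v :: "nat \<Rightarrow> 'a" assume v: "v \<in> vecs5"
    have "mat_vec (Mabcd \<alpha> (inverse a) (-b) (c+d) d) (mat_vec M v) =
      mat_vec (Mabcd \<alpha> (inverse a * a) (inverse a * b + (-b) * inverse a) ((c+d)*c+\<alpha>*d*d) ((c+d)*d+d*c+d*d)) v"
      unfolding M(1) using M(2) by (intro mv_comp) auto
    also have "\<dots> = v" unfolding p using mv_id[OF v] .
    finally show "mat_vec (Mabcd \<alpha> (inverse a) (-b) (c+d) d) (mat_vec M v) = v" .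
  qed
qed

lemma G_1: "M \<in> Ggrp \<alpha> \<Longrightarrow> mat_vec M v 1 = v 1"
  by (erule G_elim) (simp add: mv_M)

lemma G_qf: "(2::'a::field) = 0 \<Longrightarrow> M \<in> Ggrp \<alpha> \<Longrightarrow> qf (mat_vec M v) = qf (v :: nat \<Rightarrow> 'a)"
  apply (erule G_elim)
  apply (simp add: mv_M qf_def)
  apply (rule Q_inv)
  apply auto
  done

lemma G_z45f: "M \<in> Ggrp \<alpha> \<Longrightarrow> z45 v \<Longrightarrow> z45 (mat_vec M v)"
  by (erule G_elim) (simp add: mv_M z45_def)

lemma G_z2345f: "M \<in> Ggrp \<alpha> \<Longrightarrow> z2345 v \<Longrightarrow> z2345 (mat_vec M v)"
  by (erule G_elim) (simp add: mv_M z2345_def)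

lemma G_z45:
  assumes "(2::'a::field) = 0" "M \<in> Ggrp \<alpha>" "(v :: nat \<Rightarrow> 'a) \<in> vecs5"
  shows "z45 (mat_vec M v) = z45 v" "z2345 (mat_vec M v) = z2345 v"
proof -
  obtain M' where M': "M' \<in> Ggrp \<alpha>" "\<forall>v\<in>vecs5. mat_vec M' (mat_vec M v) = v" using G_inv[OF assms(1,2)] by blast
  have e: "mat_vec M' (mat_vec M v) = v" using M' assms(3) by blast
  show "z45 (mat_vec M v) = z45 v"
  proof
    assume "z45 (mat_vec M v)" hence "z45 (mat_vec M' (mat_vec M v))" by (rule G_z45f[OF M'(1)])
    thus "z45 v" using e by simp
  next
    assume "z45 v" thus "z45 (mat_vec M v)" by (rule G_z45f[OF assms(2)])
  qed
  show "z2345 (mat_vec M v) = z2345 v"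
  proof
    assume "z2345 (mat_vec M v)" hence "z2345 (mat_vec M' (mat_vec M v))" by (rule G_z2345f[OF M'(1)])
    thus "z2345 v" using e by simp
  next
    assume "z2345 v" thus "z2345 (mat_vec M v)" by (rule G_z2345f[OF assms(2)])
  qed
qed

lemma G_nz:
  assumes "(2::'a::field) = 0" "M \<in> Ggrp \<alpha>" "(v :: nat \<Rightarrow> 'a) \<in> vecs5" "v \<noteq> (\<lambda>_. 0)"
  shows "mat_vec M v \<noteq> (\<lambda>_. 0)"
proof
  assume z: "mat_vec M v = (\<lambda>_. 0)"
  obtain M' where M': "M' \<in> Ggrp \<alpha>" "\<forall>v\<in>vecs5. mat_vec M' (mat_vec M v) = v" using G_inv[OF assms(1,2)] by blast
  have "v = mat_vec M' (\<lambda>_. 0)" using M' assms(3) z by metis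
  thus False using assms(4) mat_vec_zero by metis
qed

lemma G_F:
  assumes "(2::'a::field) = 0" "M \<in> Ggrp \<alpha>" "(v :: nat \<Rightarrow> 'a) \<in> vecs5"
  shows "FN (mat_vec M v) = FN v" "Fl (mat_vec M v) = Fl v" "Fpi (mat_vec M v) = Fpi v"
    "FH (mat_vec M v) = FH v" "FS (mat_vec M v) = FS v" "FC (mat_vec M v) = FC v"
    "FQ lam (mat_vec M v) = FQ lam v"
  using G_z45[OF assms] G_1[OF assms(2)] G_qf[OF assms(1,2)] by (simp_all add: Fdefs)

lemma orbit_region:
  fixes \<alpha> :: "'a::field"
  assumes two: "(2::'a) = 0" and hF: "hom F"
    and inv: "\<And>M v. M \<in> Ggrp \<alpha> \<Longrightarrow> v \<in> vecs5 \<Longrightarrow> F (mat_vec M v) = F v"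
    and tr: "\<And>v. v \<in> vecs5 \<Longrightarrow> v \<noteq> (\<lambda>_. 0) \<Longrightarrow> F v \<Longrightarrow>
        \<exists>M\<in>Ggrp \<alpha>. \<exists>c. c \<noteq> 0 \<and> mat_vec M v0 = (\<lambda>i. c * v i)"
    and P: "P \<in> pts_where F" and v0: "v0 \<in> vecs5"
  shows "orbit (Ggrp \<alpha>) P = pts_where F"
proof -
  obtain v where v: "P = proj_pt v" "v \<in> vecs5" "v \<noteq> (\<lambda>_. 0)" "F v" using P unfolding pts_where_def by auto
  have o: "orbit (Ggrp \<alpha>) P = {proj_pt (mat_vec M v) | M. M \<in> Ggrp \<alpha>}"
    unfolding orbit_def v(1) act_proj ..
  show ?thesis unfolding o
  proof (rule equalityI; rule subsetI)
    fix Q assume "Q \<in> {proj_pt (mat_vec M v) | M. M \<in> Ggrp \<alpha>}"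
    then obtain M where M: "Q = proj_pt (mat_vec M v)" "M \<in> Ggrp \<alpha>" by blast
    show "Q \<in> pts_where F" unfolding pts_where_def using M G_nz[OF two M(2) v(2,3)] inv[OF M(2) v(2)] v(4)
      by auto
  next
    fix Q assume "Q \<in> pts_where F"
    then obtain w where w: "Q = proj_pt w" "w \<in> vecs5" "w \<noteq> (\<lambda>_. 0)" "F w" unfolding pts_where_def by auto
    obtain M1 c1 where M1: "M1 \<in> Ggrp \<alpha>" "c1 \<noteq> 0" "mat_vec M1 v0 = (\<lambda>i. c1 * v i)" using tr[OF v(2-4)] by blast
    obtain M2 c2 where M2: "M2 \<in> Ggrp \<alpha>" "c2 \<noteq> 0" "mat_vec M2 v0 = (\<lambda>i. c2 * w i)" using tr[OF w(2-4)] by blast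
    obtain M1' where M1': "M1' \<in> Ggrp \<alpha>" "\<forall>v\<in>vecs5. mat_vec M1' (mat_vec M1 v) = v" using G_inv[OF two M1(1)] by blast
    obtain M3 where M3: "M3 \<in> Ggrp \<alpha>" "\<forall>v. mat_vec M2 (mat_vec M1' v) = mat_vec M3 v" using G_comp[OF two M2(1) M1'(1)] by blast
    have e1: "mat_vec M1' (\<lambda>i. c1 * v i) = v0" using M1(3) M1'(2) v0 by metis
    have "(\<lambda>i. c1 * mat_vec M3 v i) = mat_vec M3 (\<lambda>i. c1 * v i)" by (simp add: mat_vec_scale)
    also have "\<dots> = mat_vec M2 (mat_vec M1' (\<lambda>i. c1 * v i))" using M3(2) by simp
    also have "\<dots> = (\<lambda>i. c2 * w i)" using e1 M2(3) by simp
    finally have e2: "(\<lambda>i. c1 * mat_vec M3 v i) = (\<lambda>i. c2 * w i)" .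
    have "Q = proj_pt (mat_vec M3 v)"
      using proj_scale[OF M1(2), of "mat_vec M3 v"] proj_scale[OF M2(2), of w] e2 w(1) by simp
    thus "Q \<in> {proj_pt (mat_vec M v) | M. M \<in> Ggrp \<alpha>}" using M3(1) by blast
  qed
qed

lemma neg_c2: "(2::'a::field) = 0 \<Longrightarrow> - y = (y::'a)"
proof -
  assume "(2::'a) = 0"
  hence "y + y = 0" by (metis mult_2 mult_zero_left)
  thus ?thesis by (simp add: eq_neg_iff_add_eq_0)
qed

lemma tr_wrap: "\<exists>a b c d. a \<noteq> 0 \<and> c^2+c*d+\<alpha>*d^2 = 1 \<and> (\<exists>l. l \<noteq> 0 \<and> mat_vec (Mabcd \<alpha> a b c d) v0 = (\<lambda>i. l * w i))
  \<Longrightarrow> \<exists>M\<in>Ggrp \<alpha>. \<exists>c. c \<noteq> 0 \<and> mat_vec M v0 = (\<lambda>i. c * w i)"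
  using G_intro by blast

lemma trans_N:
  fixes \<alpha> :: "'a::field"
  assumes "x1 \<noteq> 0"
  shows "\<exists>a b c d. a \<noteq> 0 \<and> c^2+c*d+\<alpha>*d^2 = 1 \<and> (\<exists>l. l \<noteq> 0 \<and>
     mat_vec (Mabcd \<alpha> a b c d) (vec5 1 0 0 0 0) = (\<lambda>i. l * vec5 x1 0 0 0 0 i))"
  apply (rule exI[of _ 1], rule exI[of _ 0], rule exI[of _ 1], rule exI[of _ 0])
  using assms by (simp add: mv_M vec5_scale vec5_eq_iff) (rule exI[of _ "inverse x1"], simp)

lemma trans_l:
  fixes \<alpha> :: "'a::{field,finite}"
  assumes two: "(2::'a) = 0" and irr: "irreducible [:\<alpha>, 1, 1:]" and nz: "\<not> (x2 = 0 \<and> x3 = 0)"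
  shows "\<exists>a b c d. a \<noteq> 0 \<and> c^2+c*d+\<alpha>*d^2 = 1 \<and> (\<exists>l. l \<noteq> 0 \<and>
     mat_vec (Mabcd \<alpha> a b c d) (vec5 x1 1 0 0 0) = (\<lambda>i. l * vec5 x1 x2 x3 0 0 i))"
proof -
  have n0: "x2^2 + x2*x3 + \<alpha>*x3^2 \<noteq> 0" using norm_nz[OF irr] nz by blast
  obtain t where t: "t * t = x2^2 + x2*x3 + \<alpha>*x3^2" using sqrt_ex[OF two] by blast
  have t0: "t \<noteq> 0" using t n0 by auto
  show ?thesis
  proof (intro exI conjI)
    show "t \<noteq> 0" by fact
    show "(x2/t)^2 + (x2/t)*(x3/t) + \<alpha>*(x3/t)^2 = 1" using norm_one[OF t t0] .
    show "(1::'a) \<noteq> 0" by simp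
    show "mat_vec (Mabcd \<alpha> t 0 (x2/t) (x3/t)) (vec5 x1 1 0 0 0) = (\<lambda>i. 1 * vec5 x1 x2 x3 0 0 i)"
      using t0 by (simp add: mv_M vec5_scale vec5_eq_iff)
  qed
qed

lemma core_HC:
  fixes x2 x3 x4 x5 t :: "'a::field"
  assumes "\<not> (x4 = 0 \<and> x5 = 0)" "x2*x5 = x3*x4" "t \<noteq> 0"
  shows "\<exists>b. b*(x4/t) = x2 \<and> b*(x5/t) = x3"
proof (cases "x4 = 0")
  case True
  hence x5: "x5 \<noteq> 0" using assms by auto
  have "x2 * x5 = 0" using assms(2) True by simp
  hence "x2 = 0" using x5 by simp
  thus ?thesis using True assms x5 by (intro exI[of _ "t*x3/x5"]) auto
next
  case False
  have "t*x2/x4*(x5/t) = x2*x5/x4" using assms by simp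
  also have "\<dots> = x3" using False assms(2) by simp
  finally show ?thesis using False assms by (intro exI[of _ "t*x2/x4"]) auto
qed

lemma trans_HC:
  fixes \<alpha> :: "'a::{field,finite}"
  assumes two: "(2::'a) = 0" and irr: "irreducible [:\<alpha>, 1, 1:]" and nz: "\<not> (x4 = 0 \<and> x5 = 0)"
    and q: "x2*x5+x3*x4 = 0" and s: "s \<noteq> 0"
  shows "\<exists>a b c d. a \<noteq> 0 \<and> c^2+c*d+\<alpha>*d^2 = 1 \<and> (\<exists>l. l \<noteq> 0 \<and>
     mat_vec (Mabcd \<alpha> a b c d) (vec5 e 0 0 1 0) = (\<lambda>i. l * vec5 (s*e) x2 x3 x4 x5 i))"
proof -
  have n0: "x4^2 + x4*x5 + \<alpha>*x5^2 \<noteq> 0" using norm_nz[OF irr] nz by blast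
  obtain t where t: "t * t = x4^2 + x4*x5 + \<alpha>*x5^2" using sqrt_ex[OF two] by blast
  have t0: "t \<noteq> 0" using t n0 by auto
  have "x2*x5 = - (x3*x4)" using q by (simp add: eq_neg_iff_add_eq_0)
  hence e: "x2*x5 = x3*x4" using neg_c2[OF two] by simp
  obtain b where b: "b*(x4/t) = x2" "b*(x5/t) = x3" using core_HC[OF nz e t0] by blast
  show ?thesis
  proof (intro exI conjI)
    show "s/t \<noteq> 0" using t0 s by simp
    show "(x4/t)^2 + (x4/t)*(x5/t) + \<alpha>*(x5/t)^2 = 1" using norm_one[OF t t0] .
    show "inverse s \<noteq> 0" using s by simp
    have e1: "inverse (s/t) * (x4/t) = inverse s * x4" "inverse (s/t) * (x5/t) = inverse s * x5"
      using t0 s by (simp_all add: field_simps)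
    have e2: "(inverse s * b)*(x4/t) = inverse s * x2" "(inverse s * b)*(x5/t) = inverse s * x3"
      by (simp_all only: mult.assoc b)
    show "mat_vec (Mabcd \<alpha> (s/t) (inverse s * b) (x4/t) (x5/t)) (vec5 e 0 0 1 0) = (\<lambda>i. inverse s * vec5 (s*e) x2 x3 x4 x5 i)"
      unfolding mv_M vec5_at vec5_scale vec5_eq_iff using s e1 e2 by simp
  qed
qed

lemma trans_Q:
  fixes \<alpha> :: "'a::{field,finite}"
  assumes two: "(2::'a) = 0" and irr: "irreducible [:\<alpha>, 1, 1:]" and x1: "x1 \<noteq> 0" and lam: "lam \<noteq> 0"
    and q: "x2*x5+x3*x4 + lam * x1^2 = 0"
  shows "\<exists>a b c d. a \<noteq> 0 \<and> c^2+c*d+\<alpha>*d^2 = 1 \<and> (\<exists>l. l \<noteq> 0 \<and>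
     mat_vec (Mabcd \<alpha> a b c d) (vec5 1 0 (-lam) 1 0) = (\<lambda>i. l * vec5 x1 x2 x3 x4 x5 i))"
proof -
  define R1 where "R1 = x2*(x4+x5) + \<alpha>*x3*x5"
  have nz: "\<not> (x4 = 0 \<and> x5 = 0)" using q x1 lam by auto
  hence nw0: "x4^2 + x4*x5 + \<alpha>*x5^2 \<noteq> 0" using norm_nz[OF irr] by blast
  obtain t where t: "t * t = x4^2 + x4*x5 + \<alpha>*x5^2" using sqrt_ex[OF two] by blast
  have t0: "t \<noteq> 0" using t nw0 by auto
  have qq: "x2*x5+x3*x4 = -lam*x1*x1" using q by (simp add: power2_eq_square eq_neg_iff_add_eq_0 algebra_simps)
  have c1: "\<alpha> * (-lam*x1*x1) * x5 + R1 * x4 = x2 * (t*t)"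
  proof -
    have "\<alpha> * (x2*x5+x3*x4) * x5 + R1 * x4 = x2 * (x4^2 + x4*x5 + \<alpha>*x5^2) + 2*(\<alpha>*x3*x4*x5)"
      unfolding R1_def by (simp add: algebra_simps power2_eq_square mult_2)
    thus ?thesis using t qq two by simp
  qed
  have c2: "(-lam*x1*x1) * (x4+x5) + R1 * x5 = x3 * (t*t)"
  proof -
    have "(x2*x5+x3*x4) * (x4+x5) + R1 * x5 = x3 * (x4^2 + x4*x5 + \<alpha>*x5^2) + 2*(x2*x4*x5 + x2*x5*x5)"
      unfolding R1_def by (simp add: algebra_simps power2_eq_square mult_2)
    thus ?thesis using t qq two by simp
  qed
  have E2: "\<alpha>*(x1/t)*(x5/t)*(-lam) + R1/(x1*t)*(x4/t) = inverse x1 * x2"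
  proof -
    have "\<alpha>*(x1/t)*(x5/t)*(-lam) + R1/(x1*t)*(x4/t) = (\<alpha> * (-lam*x1*x1) * x5 + R1 * x4)/(t*t*x1)"
      using t0 x1 by (simp add: field_simps)
    also have "\<dots> = x2 * (t*t)/(t*t*x1)" using c1 by simp
    also have "\<dots> = inverse x1 * x2" using t0 x1 by (simp add: field_simps)
    finally show ?thesis .
  qed
  have E3: "(x1/t)*((x4/t)+(x5/t))*(-lam) + R1/(x1*t)*(x5/t) = inverse x1 * x3"
  proof -
    have "(x1/t)*((x4/t)+(x5/t))*(-lam) + R1/(x1*t)*(x5/t) = ((-lam*x1*x1) * (x4+x5) + R1 * x5)/(t*t*x1)"
      using t0 x1 by (simp add: field_simps)
    also have "\<dots> = x3 * (t*t)/(t*t*x1)" using c2 by simp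
    also have "\<dots> = inverse x1 * x3" using t0 x1 by (simp add: field_simps)
    finally show ?thesis .
  qed
  have E4: "inverse (x1/t) * (x4/t) = inverse x1 * x4" "inverse (x1/t) * (x5/t) = inverse x1 * x5"
    using t0 x1 by (simp_all add: field_simps)
  show ?thesis
  proof (intro exI conjI)
    show "x1/t \<noteq> 0" using t0 x1 by simp
    show "(x4/t)^2 + (x4/t)*(x5/t) + \<alpha>*(x5/t)^2 = 1" using norm_one[OF t t0] .
    show "inverse x1 \<noteq> 0" using x1 by simp
    show "mat_vec (Mabcd \<alpha> (x1/t) (R1/(x1*t)) (x4/t) (x5/t)) (vec5 1 0 (-lam) 1 0) =
      (\<lambda>i. inverse x1 * vec5 x1 x2 x3 x4 x5 i)"
      unfolding mv_M vec5_at vec5_scale vec5_eq_iff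
      using E2 E3 E4 x1 by simp
  qed
qed

lemma vec5_cases: "v \<in> vecs5 \<Longrightarrow> (\<And>x1 x2 x3 x4 x5. v = vec5 x1 x2 x3 x4 x5 \<Longrightarrow> P) \<Longrightarrow> P"
  using vecs5_vec5 by blast

lemma pts_cong5:
  fixes F G :: "(nat \<Rightarrow> 'a::field) \<Rightarrow> bool"
  assumes "\<And>x1 x2 x3 x4 x5. \<not> (x1 = 0 \<and> x2 = 0 \<and> x3 = 0 \<and> x4 = 0 \<and> x5 = 0) \<Longrightarrow>
     F (vec5 x1 x2 x3 x4 x5) = G (vec5 x1 x2 x3 x4 x5)"
  shows "pts_where F = pts_where G"
proof (rule pts_cong)
  fix v :: "nat \<Rightarrow> 'a" assume v: "v \<in> vecs5" "v \<noteq> (\<lambda>_. 0)"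
  obtain x1 x2 x3 x4 x5 where ve: "v = vec5 x1 x2 x3 x4 x5" using vec5_cases[OF v(1)] by blast
  have "\<not> (x1 = 0 \<and> x2 = 0 \<and> x3 = 0 \<and> x4 = 0 \<and> x5 = 0)" using v(2) unfolding ve vec5_nz .
  thus "F v = G v" unfolding ve by (rule assms)
qed

lemma tr_scale: "\<exists>M\<in>Ggrp \<alpha>. \<exists>c. c \<noteq> 0 \<and> mat_vec M v0 = (\<lambda>i. c * w i) \<Longrightarrow> s \<noteq> 0 \<Longrightarrow>
  \<exists>M\<in>Ggrp \<alpha>. \<exists>c. c \<noteq> 0 \<and> mat_vec M v0 = (\<lambda>i. c * (s * w i))"
proof -
  assume a: "\<exists>M\<in>Ggrp \<alpha>. \<exists>c. c \<noteq> 0 \<and> mat_vec M v0 = (\<lambda>i. c * w i)" "s \<noteq> 0"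
  then obtain M c where "M \<in> Ggrp \<alpha>" "c \<noteq> 0" "mat_vec M v0 = (\<lambda>i. c * w i)" by blast
  moreover have "(\<lambda>i. c/s * (s * w i)) = (\<lambda>i. c * w i)" using a(2) by (simp add: fun_eq_iff)
  moreover have "c/s \<noteq> 0" using a(2) \<open>c \<noteq> 0\<close> by simp
  ultimately show ?thesis by metis
qed

lemma mem_ptsI: "v \<in> vecs5 \<Longrightarrow> v \<noteq> (\<lambda>_. 0) \<Longrightarrow> F v \<Longrightarrow> proj_pt v \<in> pts_where F"
  unfolding pts_where_def by blast

lemma pts_PG4: "pts_where F \<subseteq> PG4"
  unfolding PG4_def pts_where_def by blast

lemma cover_vec:
  fixes v :: "nat \<Rightarrow> 'a::field"
  assumes v: "v \<in> vecs5" "v \<noteq> (\<lambda>_. 0)"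
  shows "FN v \<or> Fl v \<or> Fpi v \<or> FH v \<or> FS v \<or> FC v \<or> (\<exists>lam. lam \<noteq> 0 \<and> FQ lam v)"
proof -
  obtain x1 x2 x3 x4 x5 where ve: "v = vec5 x1 x2 x3 x4 x5" using vec5_cases[OF v(1)] by blast
  have nz: "\<not> (x1 = 0 \<and> x2 = 0 \<and> x3 = 0 \<and> x4 = 0 \<and> x5 = 0)" using v(2) unfolding ve vec5_nz .
  show ?thesis
  proof (cases "x1 = 0 \<or> x2*x5+x3*x4 = 0")
    case True
    thus ?thesis using nz unfolding ve by (auto simp: Fdefs z45_def z2345_def qf_def)
  next
    case False
    hence f: "x1 \<noteq> 0" "x2*x5+x3*x4 \<noteq> 0" by auto
    define qv where "qv = x2*x5+x3*x4"
    define lam where "lam = - qv / (x1*x1)"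
    have q0: "qv \<noteq> 0" using f qv_def by simp
    have "lam \<noteq> 0" using f q0 unfolding lam_def by simp
    moreover have "qf v = qv" unfolding ve qv_def qf_def by simp
    hence "FQ lam v" using f unfolding FQ_def by (simp add: ve lam_def power2_eq_square)
    ultimately show ?thesis by blast
  qed
qed

lemma in_orbits: "proj_pt b \<in> pts_where F \<Longrightarrow> (\<And>P. P \<in> pts_where F \<Longrightarrow> orbit G P = pts_where F) \<Longrightarrow>
   pts_where F \<in> orbits G"
  unfolding orbits_def using pts_PG4 by blast

context
  fixes \<alpha> :: "'a::{field,finite}"
  assumes two: "(2::'a) = 0" and irr: "irreducible [:\<alpha>, 1, 1:]"
begin

lemma tr_FN: "v \<in> vecs5 \<Longrightarrow> v \<noteq> (\<lambda>_. 0) \<Longrightarrow> FN v \<Longrightarrow>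
   \<exists>M\<in>Ggrp \<alpha>. \<exists>c. c \<noteq> 0 \<and> mat_vec M (vec5 1 0 0 0 0) = (\<lambda>i. c * v i)"
proof -
  assume v: "v \<in> vecs5" "v \<noteq> (\<lambda>_. 0)" "FN v"
  obtain x1 x2 x3 x4 x5 where ve: "v = vec5 x1 x2 x3 x4 x5" using vec5_cases[OF v(1)] by blast
  have c: "x1 \<noteq> 0" "v = vec5 x1 0 0 0 0" using v ve by (auto simp: Fdefs z2345_def vec5_nz)
  show ?thesis unfolding c(2) by (rule tr_wrap[OF trans_N[OF c(1)]])
qed

lemma tr_Fl: "v \<in> vecs5 \<Longrightarrow> v \<noteq> (\<lambda>_. 0) \<Longrightarrow> Fl v \<Longrightarrow>
   \<exists>M\<in>Ggrp \<alpha>. \<exists>c. c \<noteq> 0 \<and> mat_vec M (vec5 0 1 0 0 0) = (\<lambda>i. c * v i)"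
proof -
  assume v: "v \<in> vecs5" "v \<noteq> (\<lambda>_. 0)" "Fl v"
  obtain x1 x2 x3 x4 x5 where ve: "v = vec5 x1 x2 x3 x4 x5" using vec5_cases[OF v(1)] by blast
  have c: "\<not> (x2 = 0 \<and> x3 = 0)" "v = vec5 0 x2 x3 0 0" using v ve by (auto simp: Fdefs z45_def z2345_def vec5_nz)
  show ?thesis unfolding c(2) by (rule tr_wrap[OF trans_l[OF two irr c(1)]])
qed

lemma tr_Fpi: "v \<in> vecs5 \<Longrightarrow> v \<noteq> (\<lambda>_. 0) \<Longrightarrow> Fpi v \<Longrightarrow>
   \<exists>M\<in>Ggrp \<alpha>. \<exists>c. c \<noteq> 0 \<and> mat_vec M (vec5 1 1 0 0 0) = (\<lambda>i. c * v i)"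
proof -
  assume v: "v \<in> vecs5" "v \<noteq> (\<lambda>_. 0)" "Fpi v"
  obtain x1 x2 x3 x4 x5 where ve: "v = vec5 x1 x2 x3 x4 x5" using vec5_cases[OF v(1)] by blast
  have c: "x1 \<noteq> 0" "x4 = 0" "x5 = 0" "\<not> (x2 = 0 \<and> x3 = 0)" using v ve by (auto simp: Fdefs z45_def z2345_def)
  have "\<not> (x2/x1 = 0 \<and> x3/x1 = 0)" using c by auto
  from tr_scale[OF tr_wrap[OF trans_l[OF two irr this, of 1]] c(1)]
  have "\<exists>M\<in>Ggrp \<alpha>. \<exists>c. c \<noteq> 0 \<and> mat_vec M (vec5 1 1 0 0 0) = (\<lambda>i. c * (x1 * vec5 1 (x2/x1) (x3/x1) 0 0 i))" .
  moreover have "(\<lambda>i. x1 * vec5 1 (x2/x1) (x3/x1) 0 0 i) = v" using c ve by (simp add: vec5_scale)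
  hence e: "x1 * vec5 1 (x2/x1) (x3/x1) 0 0 i = v i" for i by metis
  ultimately show ?thesis by (simp only: e)
qed

lemma tr_FH: "v \<in> vecs5 \<Longrightarrow> v \<noteq> (\<lambda>_. 0) \<Longrightarrow> FH v \<Longrightarrow>
   \<exists>M\<in>Ggrp \<alpha>. \<exists>c. c \<noteq> 0 \<and> mat_vec M (vec5 0 0 0 1 0) = (\<lambda>i. c * v i)"
proof -
  assume v: "v \<in> vecs5" "v \<noteq> (\<lambda>_. 0)" "FH v"
  obtain x1 x2 x3 x4 x5 where ve: "v = vec5 x1 x2 x3 x4 x5" using vec5_cases[OF v(1)] by blast
  have c: "x1 = 0" "x2*x5+x3*x4 = 0" "\<not> (x4 = 0 \<and> x5 = 0)" using v ve by (auto simp: Fdefs z45_def qf_def)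
  show ?thesis using tr_wrap[OF trans_HC[OF two irr c(3) c(2), of 1 0]] c ve by simp
qed

lemma tr_FC: "v \<in> vecs5 \<Longrightarrow> v \<noteq> (\<lambda>_. 0) \<Longrightarrow> FC v \<Longrightarrow>
   \<exists>M\<in>Ggrp \<alpha>. \<exists>c. c \<noteq> 0 \<and> mat_vec M (vec5 1 0 0 1 0) = (\<lambda>i. c * v i)"
proof -
  assume v: "v \<in> vecs5" "v \<noteq> (\<lambda>_. 0)" "FC v"
  obtain x1 x2 x3 x4 x5 where ve: "v = vec5 x1 x2 x3 x4 x5" using vec5_cases[OF v(1)] by blast
  have c: "x1 \<noteq> 0" "x2*x5+x3*x4 = 0" "\<not> (x4 = 0 \<and> x5 = 0)" using v ve by (auto simp: Fdefs z45_def qf_def)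
  show ?thesis using tr_wrap[OF trans_HC[OF two irr c(3) c(2) c(1), of 1]] c ve by simp
qed

lemma tr_FS: "v \<in> vecs5 \<Longrightarrow> v \<noteq> (\<lambda>_. 0) \<Longrightarrow> FS v \<Longrightarrow>
   \<exists>M\<in>Ggrp \<alpha>. \<exists>c. c \<noteq> 0 \<and> mat_vec M (vec5 0 0 1 1 0) = (\<lambda>i. c * v i)"
proof -
  assume v: "v \<in> vecs5" "v \<noteq> (\<lambda>_. 0)" "FS v"
  obtain x1 x2 x3 x4 x5 where ve: "v = vec5 x1 x2 x3 x4 x5" using vec5_cases[OF v(1)] by blast
  have c: "x1 = 0" "x2*x5+x3*x4 \<noteq> 0" using v ve by (auto simp: Fdefs qf_def)
  show ?thesis using tr_wrap[OF trans_Sigma[OF two irr c(2)]] c ve by simp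
qed

lemma tr_FQ: "lam \<noteq> 0 \<Longrightarrow> v \<in> vecs5 \<Longrightarrow> v \<noteq> (\<lambda>_. 0) \<Longrightarrow> FQ lam v \<Longrightarrow>
   \<exists>M\<in>Ggrp \<alpha>. \<exists>c. c \<noteq> 0 \<and> mat_vec M (vec5 1 0 (-lam) 1 0) = (\<lambda>i. c * v i)"
proof -
  assume lam: "lam \<noteq> 0" and v: "v \<in> vecs5" "v \<noteq> (\<lambda>_. 0)" "FQ lam v"
  obtain x1 x2 x3 x4 x5 where ve: "v = vec5 x1 x2 x3 x4 x5" using vec5_cases[OF v(1)] by blast
  have c: "x1 \<noteq> 0" "x2*x5+x3*x4 + lam * x1^2 = 0" using v ve by (auto simp: Fdefs qf_def)
  show ?thesis using tr_wrap[OF trans_Q[OF two irr c(1) lam c(2)]] ve by simp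
qed

lemma orb_N: assumes "P \<in> pts_where FN" shows "orbit (Ggrp \<alpha>) P = pts_where FN"
  by (rule orbit_region[OF two hom_F(1) G_F(1)[OF two] tr_FN assms vec5_in])
lemma orb_l: assumes "P \<in> pts_where Fl" shows "orbit (Ggrp \<alpha>) P = pts_where Fl"
  by (rule orbit_region[OF two hom_F(2) G_F(2)[OF two] tr_Fl assms vec5_in])
lemma orb_pi: assumes "P \<in> pts_where Fpi" shows "orbit (Ggrp \<alpha>) P = pts_where Fpi"
  by (rule orbit_region[OF two hom_F(3) G_F(3)[OF two] tr_Fpi assms vec5_in])
lemma orb_H: assumes "P \<in> pts_where FH" shows "orbit (Ggrp \<alpha>) P = pts_where FH"
  by (rule orbit_region[OF two hom_F(4) G_F(4)[OF two] tr_FH assms vec5_in])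
lemma orb_S: assumes "P \<in> pts_where FS" shows "orbit (Ggrp \<alpha>) P = pts_where FS"
  by (rule orbit_region[OF two hom_F(5) G_F(5)[OF two] tr_FS assms vec5_in])
lemma orb_C: assumes "P \<in> pts_where FC" shows "orbit (Ggrp \<alpha>) P = pts_where FC"
  by (rule orbit_region[OF two hom_F(6) G_F(6)[OF two] tr_FC assms vec5_in])
lemma orb_Q: assumes "lam \<noteq> 0" "P \<in> pts_where (FQ lam)" shows "orbit (Ggrp \<alpha>) P = pts_where (FQ lam)"
  by (rule orbit_region[OF two hom_FQ G_F(7)[OF two] tr_FQ[OF assms(1)] assms(2) vec5_in])

lemma orbits_eq: "orbits (Ggrp \<alpha>) = {pts_where FN, pts_where Fl, pts_where Fpi, pts_where FH, pts_where FS, pts_where FC}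
   \<union> {pts_where (FQ lam) | lam. lam \<noteq> 0}"
proof (rule equalityI; rule subsetI)
  fix X assume "X \<in> orbits (Ggrp \<alpha>)"
  then obtain P where P: "X = orbit (Ggrp \<alpha>) P" "P \<in> PG4" unfolding orbits_def by blast
  then obtain v where v: "P = proj_pt v" "v \<in> vecs5" "v \<noteq> (\<lambda>_. 0)" unfolding PG4_def pts_where_def by blast
  have m: "F v \<Longrightarrow> P \<in> pts_where F" for F using mem_ptsI[OF v(2,3)] v(1) by blast
  from cover_vec[OF v(2,3)]
  show "X \<in> {pts_where FN, pts_where Fl, pts_where Fpi, pts_where FH, pts_where FS, pts_where FC}
   \<union> {pts_where (FQ lam) | lam. lam \<noteq> 0}"
  proof (elim disjE exE conjE)
    assume "FN v" thus ?thesis using P(1) orb_N m by simp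
  next
    assume "Fl v" thus ?thesis using P(1) orb_l m by simp
  next
    assume "Fpi v" thus ?thesis using P(1) orb_pi m by simp
  next
    assume "FH v" thus ?thesis using P(1) orb_H m by simp
  next
    assume "FS v" thus ?thesis using P(1) orb_S m by simp
  next
    assume "FC v" thus ?thesis using P(1) orb_C m by simp
  next
    fix lam assume l: "lam \<noteq> 0" "FQ lam v"
    hence "X = pts_where (FQ lam)" using P(1) orb_Q m by simp
    thus ?thesis using l by blast
  qed
next
  fix X :: "(nat \<Rightarrow> 'a) set set" assume X: "X \<in> {pts_where FN, pts_where Fl, pts_where Fpi, pts_where FH, pts_where FS, pts_where FC}
   \<union> {pts_where (FQ lam) | lam. lam \<noteq> 0}"
  have "pts_where FN \<in> orbits (Ggrp \<alpha>)"
    by (rule in_orbits[of "vec5 1 0 0 0 0"], rule mem_ptsI, simp_all add: vec5_nz Fdefs z2345_def orb_N)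
  moreover have "pts_where Fl \<in> orbits (Ggrp \<alpha>)"
    by (rule in_orbits[of "vec5 0 1 0 0 0"], rule mem_ptsI, simp_all add: vec5_nz Fdefs z45_def z2345_def orb_l)
  moreover have "pts_where Fpi \<in> orbits (Ggrp \<alpha>)"
    by (rule in_orbits[of "vec5 1 1 0 0 0"], rule mem_ptsI, simp_all add: vec5_nz Fdefs z45_def z2345_def orb_pi)
  moreover have "pts_where FH \<in> orbits (Ggrp \<alpha>)"
    by (rule in_orbits[of "vec5 0 0 0 1 0"], rule mem_ptsI, simp_all add: vec5_nz Fdefs z45_def qf_def orb_H)
  moreover have "pts_where FS \<in> orbits (Ggrp \<alpha>)"
    by (rule in_orbits[of "vec5 0 0 1 1 0"], rule mem_ptsI, simp_all add: vec5_nz Fdefs qf_def orb_S)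
  moreover have "pts_where FC \<in> orbits (Ggrp \<alpha>)"
    by (rule in_orbits[of "vec5 1 0 0 1 0"], rule mem_ptsI, simp_all add: vec5_nz Fdefs z45_def qf_def orb_C)
  moreover have "pts_where (FQ lam) \<in> orbits (Ggrp \<alpha>)" if "lam \<noteq> 0" for lam
    by (rule in_orbits[of "vec5 1 0 (-lam) 1 0"], rule mem_ptsI, simp_all add: vec5_nz Fdefs qf_def orb_Q[OF that])
  ultimately show "X \<in> orbits (Ggrp \<alpha>)" using X by blast
qed

end

lemma hom_z45: "hom (z45 :: (nat \<Rightarrow> 'a::field) \<Rightarrow> bool)" by (simp add: hom_def z45_scale)
lemma hom_Hf: "hom (\<lambda>x::nat \<Rightarrow> 'a::field. x 1 = 0 \<and> qf x = 0)" by (simp add: hom_def qf_scale)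

lemma quadric_H_eq: "quadric_H = pts_where (\<lambda>x::nat \<Rightarrow> 'a::field. x 1 = 0 \<and> qf x = 0)"
  by (simp add: quadric_H_def qf_def)
lemma plane_pi_eq: "plane_pi = pts_where (z45 :: (nat \<Rightarrow> 'a::field) \<Rightarrow> bool)"
  by (simp add: plane_pi_def z45_def[abs_def])

lemma L1: "{ptN} = pts_where (FN :: (nat \<Rightarrow> 'a::field) \<Rightarrow> bool)"
proof -
  have pe: "ptN = proj_pt (vec5 (1::'a) 0 0 0 0)" unfolding ptN_def
    by (rule arg_cong[where f=proj_pt]) (simp add: vec5_def fun_eq_iff)
  show ?thesis
  proof (rule equalityI; rule subsetI)
    fix P :: "(nat \<Rightarrow> 'a) set" assume "P \<in> {ptN}"
    thus "P \<in> pts_where FN" unfolding pe by (simp add: mem_ptsI vec5_nz Fdefs z2345_def)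
  next
    fix P :: "(nat \<Rightarrow> 'a) set" assume "P \<in> pts_where FN"
    then obtain v where v: "P = proj_pt v" "v \<in> vecs5" "v \<noteq> (\<lambda>_. 0)" "FN v" unfolding pts_where_def by blast
    obtain x1 x2 x3 x4 x5 where ve: "v = vec5 x1 x2 x3 x4 x5" using vec5_cases[OF v(2)] by blast
    have c: "x1 \<noteq> 0" "v = (\<lambda>i. x1 * vec5 1 0 0 0 0 i)" using v ve by (auto simp: Fdefs z2345_def vec5_nz vec5_scale)
    show "P \<in> {ptN}" using proj_scale[OF c(1)] v(1) c(2) pe by simp
  qed
qed

lemma L2: "line_l = pts_where (Fl :: (nat \<Rightarrow> 'a::field) \<Rightarrow> bool)"
  unfolding line_l_def by (rule pts_cong5) (auto simp: Fdefs z45_def z2345_def)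

lemma L3: "plane_pi - (line_l \<union> {ptN}) = pts_where (Fpi :: (nat \<Rightarrow> 'a::field) \<Rightarrow> bool)"
proof -
  have "plane_pi - (line_l \<union> {ptN}) = pts_where (z45 :: (nat \<Rightarrow> 'a) \<Rightarrow> bool) - pts_where (\<lambda>x. Fl x \<or> FN x)"
    by (simp add: plane_pi_eq L2 L1 pts_union)
  also have "\<dots> = pts_where (\<lambda>x. z45 x \<and> \<not> (Fl x \<or> FN x))"
    by (rule pts_diff[OF hom_or[OF hom_F(2) hom_F(1)]])
  also have "\<dots> = pts_where Fpi" by (rule pts_cong5) (auto simp: Fdefs z45_def z2345_def)
  finally show ?thesis .
qed

lemma L4: "quadric_H - line_l = pts_where (FH :: (nat \<Rightarrow> 'a::field) \<Rightarrow> bool)"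
proof -
  have "quadric_H - line_l = pts_where (\<lambda>x::nat \<Rightarrow> 'a. x 1 = 0 \<and> qf x = 0) - pts_where Fl"
    by (simp add: quadric_H_eq L2)
  also have "\<dots> = pts_where (\<lambda>x. (x 1 = 0 \<and> qf x = 0) \<and> \<not> Fl x)" by (rule pts_diff[OF hom_F(2)])
  also have "\<dots> = pts_where FH" by (rule pts_cong5) (auto simp: Fdefs z45_def z2345_def qf_def)
  finally show ?thesis .
qed

lemma L5: "solid_Sigma - quadric_H = pts_where (FS :: (nat \<Rightarrow> 'a::field) \<Rightarrow> bool)"
proof -
  have "solid_Sigma - quadric_H = pts_where (\<lambda>x::nat \<Rightarrow> 'a. x 1 = 0) - pts_where (\<lambda>x. x 1 = 0 \<and> qf x = 0)"
    by (simp add: quadric_H_eq solid_Sigma_def)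
  also have "\<dots> = pts_where (\<lambda>x. x 1 = 0 \<and> \<not> (x 1 = 0 \<and> qf x = 0))" by (rule pts_diff[OF hom_Hf])
  also have "\<dots> = pts_where FS" by (rule pts_cong5) (auto simp: Fdefs)
  finally show ?thesis .
qed

lemma L6: "cone_C - (plane_pi \<union> quadric_H) = pts_where (FC :: (nat \<Rightarrow> 'a::field) \<Rightarrow> bool)"
proof -
  have "cone_C - (plane_pi \<union> quadric_H) = pts_where (\<lambda>x::nat \<Rightarrow> 'a. qf x = 0) - pts_where (\<lambda>x. z45 x \<or> (x 1 = 0 \<and> qf x = 0))"
    by (simp add: quadric_H_eq plane_pi_eq pts_union cone_C_def qf_def)
  also have "\<dots> = pts_where (\<lambda>x. qf x = 0 \<and> \<not> (z45 x \<or> (x 1 = 0 \<and> qf x = 0)))"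
    by (rule pts_diff[OF hom_or[OF hom_z45 hom_Hf]])
  also have "\<dots> = pts_where FC" by (rule pts_cong5) (auto simp: Fdefs)
  finally show ?thesis .
qed

lemma L7: "quadric_Q lam - quadric_H = pts_where (FQ (lam::'a::field))"
proof -
  have "quadric_Q lam - quadric_H = pts_where (\<lambda>x::nat \<Rightarrow> 'a. qf x + lam * (x 1)^2 = 0) - pts_where (\<lambda>x. x 1 = 0 \<and> qf x = 0)"
    by (simp add: quadric_H_eq quadric_Q_def qf_def)
  also have "\<dots> = pts_where (\<lambda>x. qf x + lam * (x 1)^2 = 0 \<and> \<not> (x 1 = 0 \<and> qf x = 0))" by (rule pts_diff[OF hom_Hf])
  also have "\<dots> = pts_where (FQ lam)" by (rule pts_cong5) (auto simp: Fdefs)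
  finally show ?thesis .
qed

lemma card_pts:
  fixes g :: "'b \<Rightarrow> nat \<Rightarrow> 'a::field"
  assumes hF: "hom F"
    and g: "\<And>x. x \<in> A \<Longrightarrow> g x \<in> vecs5 \<and> g x \<noteq> (\<lambda>_. 0) \<and> F (g x)"
    and sur: "\<And>v. v \<in> vecs5 \<Longrightarrow> v \<noteq> (\<lambda>_. 0) \<Longrightarrow> F v \<Longrightarrow> \<exists>x\<in>A. \<exists>c. c \<noteq> 0 \<and> g x = (\<lambda>i. c * v i)"
    and inj: "\<And>x y c. x \<in> A \<Longrightarrow> y \<in> A \<Longrightarrow> c \<noteq> 0 \<Longrightarrow> g y = (\<lambda>i. c * g x i) \<Longrightarrow> x = y"
  shows "card (pts_where F) = card A"
proof -
  have e: "pts_where F = (\<lambda>x. proj_pt (g x)) ` A"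
  proof (rule equalityI; rule subsetI)
    fix P assume "P \<in> pts_where F"
    then obtain v where v: "P = proj_pt v" "v \<in> vecs5" "v \<noteq> (\<lambda>_. 0)" "F v" unfolding pts_where_def by blast
    then obtain x c where x: "x \<in> A" "c \<noteq> 0" "g x = (\<lambda>i. c * v i)" using sur by blast
    hence "proj_pt (g x) = P" using v(1) proj_scale by simp
    thus "P \<in> (\<lambda>x. proj_pt (g x)) ` A" using x(1) by blast
  next
    fix P assume "P \<in> (\<lambda>x. proj_pt (g x)) ` A"
    then obtain x where "x \<in> A" "P = proj_pt (g x)" by blast
    thus "P \<in> pts_where F" using g unfolding pts_where_def by blast
  qed
  have "inj_on (\<lambda>x. proj_pt (g x)) A"
  proof (rule inj_onI)
    fix x y assume xy: "x \<in> A" "y \<in> A" "proj_pt (g x) = proj_pt (g y)"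
    then obtain c where "c \<noteq> 0" "g y = (\<lambda>i. c * g x i)" using proj_eq by blast
    thus "x = y" using inj xy by blast
  qed
  thus ?thesis unfolding e by (rule card_image)
qed


lemma ex_scale: "x \<in> A \<Longrightarrow> c \<noteq> 0 \<Longrightarrow> g x = vec5 (c*x1) (c*x2) (c*x3) (c*x4) (c*x5) \<Longrightarrow>
  \<exists>x\<in>A. \<exists>c. c \<noteq> (0::'a::field) \<and> g x = (\<lambda>i. c * vec5 x1 x2 x3 x4 x5 i)"
  by (auto simp: vec5_scale)

lemma card_l: "card (pts_where (Fl :: (nat \<Rightarrow> 'a::{field,finite}) \<Rightarrow> bool)) = CARD('a) + 1"
proof -
  define g where "g = case_sum (\<lambda>t::'a. vec5 0 1 t 0 0) (\<lambda>_::unit. vec5 (0::'a) 0 1 0 0)"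
  have "card (pts_where (Fl :: (nat \<Rightarrow> 'a) \<Rightarrow> bool)) = card ((UNIV::'a set) <+> (UNIV::unit set))"
  proof (rule card_pts[OF hom_F(2), where g=g])
    show "\<And>x. x \<in> UNIV <+> UNIV \<Longrightarrow> g x \<in> vecs5 \<and> g x \<noteq> (\<lambda>_. 0) \<and> Fl (g x)"
      by (auto simp: g_def Fdefs z45_def z2345_def vec5_nz split: sum.splits)
    show "\<exists>x\<in>UNIV <+> UNIV. \<exists>c. c \<noteq> 0 \<and> g x = (\<lambda>i. c * v i)"
      if v: "v \<in> vecs5" "v \<noteq> (\<lambda>_. 0)" "Fl v" for v
    proof -
      obtain x1 x2 x3 x4 x5 where ve: "v = vec5 x1 x2 x3 x4 x5" using vec5_cases[OF v(1)] by blast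
      have c: "x1 = 0" "x4 = 0" "x5 = 0" "\<not> (x2 = 0 \<and> x3 = 0)" using v ve by (auto simp: Fdefs z45_def z2345_def)
      show ?thesis
      proof (cases "x2 = 0")
        case True
        hence "x3 \<noteq> 0" using c by simp
        thus ?thesis unfolding ve using True c
          by (intro ex_scale[of "Inr ()" _ "inverse x3"]) (simp_all add: g_def vec5_eq_iff)
      next
        case False
        thus ?thesis unfolding ve using c
          by (intro ex_scale[of "Inl (x3/x2)" _ "inverse x2"]) (simp_all add: g_def vec5_eq_iff field_simps)
      qed
    qed
    show "\<And>x y c. x \<in> UNIV <+> UNIV \<Longrightarrow> y \<in> UNIV <+> UNIV \<Longrightarrow> c \<noteq> 0 \<Longrightarrow> g y = (\<lambda>i. c * g x i) \<Longrightarrow> x = y"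
      by (auto simp: g_def vec5_scale vec5_eq_iff split: sum.splits)
  qed
  also have "\<dots> = CARD('a) + 1" by (simp add: card_Plus)
  finally show ?thesis .
qed

lemma card_pi: "card (pts_where (Fpi :: (nat \<Rightarrow> 'a::{field,finite}) \<Rightarrow> bool)) = CARD('a) * CARD('a) - 1"
proof -
  define g where "g = (\<lambda>p::'a \<times> 'a. vec5 1 (fst p) (snd p) 0 0)"
  have "card (pts_where (Fpi :: (nat \<Rightarrow> 'a) \<Rightarrow> bool)) = card ((UNIV \<times> UNIV) - {(0::'a, 0::'a)})"
  proof (rule card_pts[OF hom_F(3), where g=g])
    show "\<And>x. x \<in> (UNIV \<times> UNIV) - {(0, 0)} \<Longrightarrow> g x \<in> vecs5 \<and> g x \<noteq> (\<lambda>_. 0) \<and> Fpi (g x)"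
      by (auto simp: g_def Fdefs z45_def z2345_def vec5_nz prod_eq_iff)
    show "\<exists>x\<in>(UNIV \<times> UNIV) - {(0, 0)}. \<exists>c. c \<noteq> 0 \<and> g x = (\<lambda>i. c * v i)"
      if v: "v \<in> vecs5" "v \<noteq> (\<lambda>_. 0)" "Fpi v" for v
    proof -
      obtain x1 x2 x3 x4 x5 where ve: "v = vec5 x1 x2 x3 x4 x5" using vec5_cases[OF v(1)] by blast
      have c: "x1 \<noteq> 0" "x4 = 0" "x5 = 0" "\<not> (x2 = 0 \<and> x3 = 0)" using v ve by (auto simp: Fdefs z45_def z2345_def)
      show ?thesis unfolding ve using c
        by (intro ex_scale[of "(x2/x1, x3/x1)" _ "inverse x1"]) (simp_all add: g_def vec5_eq_iff field_simps)
    qed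
    show "\<And>x y c. x \<in> (UNIV \<times> UNIV) - {(0, 0)} \<Longrightarrow> y \<in> (UNIV \<times> UNIV) - {(0, 0)} \<Longrightarrow> c \<noteq> 0 \<Longrightarrow> g y = (\<lambda>i. c * g x i) \<Longrightarrow> x = y"
      by (auto simp: g_def vec5_scale vec5_eq_iff prod_eq_iff)
  qed
  also have "\<dots> = CARD('a) * CARD('a) - 1" by (simp add: card_Diff_singleton card_cartesian_product)
  finally show ?thesis .
qed

lemma card_H: "card (pts_where (FH :: (nat \<Rightarrow> 'a::{field,finite}) \<Rightarrow> bool)) = CARD('a) * CARD('a) + CARD('a)"
proof -
  define g where "g = case_sum (\<lambda>p::'a \<times> 'a. vec5 0 (-(fst p * snd p)) (fst p) (snd p) 1) (\<lambda>s::'a. vec5 0 s 0 1 0)"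
  have "card (pts_where (FH :: (nat \<Rightarrow> 'a) \<Rightarrow> bool)) = card ((UNIV \<times> UNIV) <+> (UNIV::'a set) :: (('a \<times> 'a) + 'a) set)"
  proof (rule card_pts[OF hom_F(4), where g=g])
    show "\<And>x. x \<in> (UNIV \<times> UNIV) <+> UNIV \<Longrightarrow> g x \<in> vecs5 \<and> g x \<noteq> (\<lambda>_. 0) \<and> FH (g x)"
      by (auto simp: g_def Fdefs z45_def qf_def vec5_nz split: sum.splits)
    show "\<exists>x\<in>(UNIV \<times> UNIV) <+> UNIV. \<exists>c. c \<noteq> 0 \<and> g x = (\<lambda>i. c * v i)"
      if v: "v \<in> vecs5" "v \<noteq> (\<lambda>_. 0)" "FH v" for v
    proof -
      obtain x1 x2 x3 x4 x5 where ve: "v = vec5 x1 x2 x3 x4 x5" using vec5_cases[OF v(1)] by blast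
      have c: "x1 = 0" "x2*x5+x3*x4 = 0" "\<not> (x4 = 0 \<and> x5 = 0)" using v ve by (auto simp: Fdefs z45_def qf_def)
      show ?thesis
      proof (cases "x5 = 0")
        case True
        hence x4: "x4 \<noteq> 0" using c by simp
        hence "x3 = 0" using c True by simp
        thus ?thesis unfolding ve using True c x4
          by (intro ex_scale[of "Inr (x2/x4)" _ "inverse x4"]) (simp_all add: g_def vec5_eq_iff field_simps)
      next
        case False
        have e: "x2*x5 = -(x3*x4)" using c(2) by (simp add: eq_neg_iff_add_eq_0)
        have "-(x3/x5*(x4/x5)) = inverse x5 * x2" using False e by (simp add: field_simps)
        thus ?thesis unfolding ve using False c
          by (intro ex_scale[of "Inl (x3/x5, x4/x5)" _ "inverse x5"]) (simp_all add: g_def vec5_eq_iff field_simps)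
      qed
    qed
    show "\<And>x y c. x \<in> (UNIV \<times> UNIV) <+> UNIV \<Longrightarrow> y \<in> (UNIV \<times> UNIV) <+> UNIV \<Longrightarrow> c \<noteq> 0 \<Longrightarrow> g y = (\<lambda>i. c * g x i) \<Longrightarrow> x = y"
      by (auto simp: g_def vec5_scale vec5_eq_iff prod_eq_iff split: sum.splits)
  qed
  also have "\<dots> = CARD('a) * CARD('a) + CARD('a)" by (simp add: card_Plus card_cartesian_product)
  finally show ?thesis .
qed


lemma card_D: "card ((UNIV \<times> UNIV \<times> (UNIV - {0})) <+> (UNIV \<times> (UNIV - {0})) :: (('a::{field,finite} \<times> 'a \<times> 'a) + ('a \<times> 'a)) set) = CARD('a) * (CARD('a) * (CARD('a) - 1)) + CARD('a) * (CARD('a) - 1)"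
  by (simp add: card_Plus card_cartesian_product card_Diff_singleton)

lemma card_S: "card (pts_where (FS :: (nat \<Rightarrow> 'a::{field,finite}) \<Rightarrow> bool)) = CARD('a) * (CARD('a) * (CARD('a) - 1)) + CARD('a) * (CARD('a) - 1)"
proof -
  define g where "g = case_sum (\<lambda>p::'a \<times> 'a \<times> 'a. vec5 0 (snd (snd p) - fst p * fst (snd p)) (fst p) (fst (snd p)) 1)
     (\<lambda>p::'a \<times> 'a. vec5 0 (fst p) (snd p) 1 0)"
  have "card (pts_where (FS :: (nat \<Rightarrow> 'a) \<Rightarrow> bool)) = card ((UNIV \<times> UNIV \<times> (UNIV - {0})) <+> (UNIV \<times> (UNIV - {0})) :: (('a \<times> 'a \<times> 'a) + ('a \<times> 'a)) set)"
  proof (rule card_pts[OF hom_F(5), where g=g])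
    show "\<And>x. x \<in> ((UNIV \<times> UNIV \<times> (UNIV - {0})) <+> (UNIV \<times> (UNIV - {0}))) \<Longrightarrow> g x \<in> vecs5 \<and> g x \<noteq> (\<lambda>_. 0) \<and> FS (g x)"
      by (auto simp: g_def Fdefs qf_def vec5_nz split: sum.splits)
    show "\<exists>x\<in>((UNIV \<times> UNIV \<times> (UNIV - {0})) <+> (UNIV \<times> (UNIV - {0}))). \<exists>c. c \<noteq> 0 \<and> g x = (\<lambda>i. c * v i)"
      if v: "v \<in> vecs5" "v \<noteq> (\<lambda>_. 0)" "FS v" for v
    proof -
      obtain x1 x2 x3 x4 x5 where ve: "v = vec5 x1 x2 x3 x4 x5" using vec5_cases[OF v(1)] by blast
      have c: "x1 = 0" "x2*x5+x3*x4 \<noteq> 0" using v ve by (auto simp: Fdefs qf_def)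
      show ?thesis
      proof (cases "x5 = 0")
        case True
        hence x34: "x4 \<noteq> 0" "x3 \<noteq> 0" using c by auto
        thus ?thesis unfolding ve using True c
          by (intro ex_scale[of "Inr (x2/x4, x3/x4)" _ "inverse x4"]) (simp_all add: g_def vec5_eq_iff field_simps Plus_def)
      next
        case False
        have e: "(x2*x5+x3*x4)/(x5*x5) - x3/x5*(x4/x5) = inverse x5 * x2" using False by (simp add: field_simps)
        have n: "(x2*x5+x3*x4)/(x5*x5) \<noteq> 0" using False c by simp
        show ?thesis unfolding ve using False c e n
          by (intro ex_scale[of "Inl (x3/x5, x4/x5, (x2*x5+x3*x4)/(x5*x5))" _ "inverse x5"]) (simp_all add: g_def vec5_eq_iff Plus_def divide_inverse_commute)
      qed
    qed
    show "\<And>x y c. x \<in> ((UNIV \<times> UNIV \<times> (UNIV - {0})) <+> (UNIV \<times> (UNIV - {0}))) \<Longrightarrow> y \<in> ((UNIV \<times> UNIV \<times> (UNIV - {0})) <+> (UNIV \<times> (UNIV - {0}))) \<Longrightarrow> c \<noteq> 0 \<Longrightarrow> g y = (\<lambda>i. c * g x i) \<Longrightarrow> x = y"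
      by (auto simp: g_def vec5_scale vec5_eq_iff prod_eq_iff split: sum.splits)
  qed
  thus ?thesis using card_D by simp
qed

lemma card_C: "card (pts_where (FC :: (nat \<Rightarrow> 'a::{field,finite}) \<Rightarrow> bool)) = CARD('a) * (CARD('a) * (CARD('a) - 1)) + CARD('a) * (CARD('a) - 1)"
proof -
  define g where "g = case_sum (\<lambda>p::'a \<times> 'a \<times> 'a. vec5 1 (-(fst p * fst (snd p))/snd (snd p)) (fst p) (fst (snd p)) (snd (snd p)))
     (\<lambda>p::'a \<times> 'a. vec5 1 (fst p) 0 (snd p) 0)"
  have "card (pts_where (FC :: (nat \<Rightarrow> 'a) \<Rightarrow> bool)) = card ((UNIV \<times> UNIV \<times> (UNIV - {0})) <+> (UNIV \<times> (UNIV - {0})) :: (('a \<times> 'a \<times> 'a) + ('a \<times> 'a)) set)"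
  proof (rule card_pts[OF hom_F(6), where g=g])
    show "\<And>x. x \<in> ((UNIV \<times> UNIV \<times> (UNIV - {0})) <+> (UNIV \<times> (UNIV - {0}))) \<Longrightarrow> g x \<in> vecs5 \<and> g x \<noteq> (\<lambda>_. 0) \<and> FC (g x)"
      by (auto simp: g_def Fdefs qf_def z45_def vec5_nz split: sum.splits)
    show "\<exists>x\<in>((UNIV \<times> UNIV \<times> (UNIV - {0})) <+> (UNIV \<times> (UNIV - {0}))). \<exists>c. c \<noteq> 0 \<and> g x = (\<lambda>i. c * v i)"
      if v: "v \<in> vecs5" "v \<noteq> (\<lambda>_. 0)" "FC v" for v
    proof -
      obtain x1 x2 x3 x4 x5 where ve: "v = vec5 x1 x2 x3 x4 x5" using vec5_cases[OF v(1)] by blast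
      have c: "x1 \<noteq> 0" "x2*x5+x3*x4 = 0" "\<not> (x4 = 0 \<and> x5 = 0)" using v ve by (auto simp: Fdefs qf_def z45_def)
      show ?thesis
      proof (cases "x5 = 0")
        case True
        hence x4: "x4 \<noteq> 0" using c by simp
        hence "x3 = 0" using c True by simp
        thus ?thesis unfolding ve using True c x4
          by (intro ex_scale[of "Inr (x2/x1, x4/x1)" _ "inverse x1"]) (simp_all add: g_def vec5_eq_iff field_simps Plus_def)
      next
        case False
        have ee: "x2*x5 = -(x3*x4)" using c(2) by (simp add: eq_neg_iff_add_eq_0)
        have e: "-(x3/x1*(x4/x1))/(x5/x1) = inverse x1 * x2" using False c(1) ee by (simp add: field_simps)
        show ?thesis unfolding ve using False c e
          by (intro ex_scale[of "Inl (x3/x1, x4/x1, x5/x1)" _ "inverse x1"]) (simp_all add: g_def vec5_eq_iff Plus_def divide_inverse_commute)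
      qed
    qed
    show "\<And>x y c. x \<in> ((UNIV \<times> UNIV \<times> (UNIV - {0})) <+> (UNIV \<times> (UNIV - {0}))) \<Longrightarrow> y \<in> ((UNIV \<times> UNIV \<times> (UNIV - {0})) <+> (UNIV \<times> (UNIV - {0}))) \<Longrightarrow> c \<noteq> 0 \<Longrightarrow> g y = (\<lambda>i. c * g x i) \<Longrightarrow> x = y"
      by (auto simp: g_def vec5_scale vec5_eq_iff prod_eq_iff split: sum.splits)
  qed
  thus ?thesis using card_D by simp
qed

lemma card_Q:
  fixes lam :: "'a::{field,finite}"
  assumes lam: "lam \<noteq> 0"
  shows "card (pts_where (FQ lam)) = CARD('a) * (CARD('a) * (CARD('a) - 1)) + CARD('a) * (CARD('a) - 1)"
proof -
  define g where "g = case_sum (\<lambda>p::'a \<times> 'a \<times> 'a. vec5 1 (-(lam + fst p * fst (snd p))/snd (snd p)) (fst p) (fst (snd p)) (snd (snd p)))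
     (\<lambda>p::'a \<times> 'a. vec5 1 (fst p) (-lam/snd p) (snd p) 0)"
  have "card (pts_where (FQ lam)) = card ((UNIV \<times> UNIV \<times> (UNIV - {0})) <+> (UNIV \<times> (UNIV - {0})) :: (('a \<times> 'a \<times> 'a) + ('a \<times> 'a)) set)"
  proof (rule card_pts[OF hom_FQ, where g=g])
    show "\<And>x. x \<in> ((UNIV \<times> UNIV \<times> (UNIV - {0})) <+> (UNIV \<times> (UNIV - {0}))) \<Longrightarrow> g x \<in> vecs5 \<and> g x \<noteq> (\<lambda>_. 0) \<and> FQ lam (g x)"
      by (auto simp: g_def Fdefs qf_def vec5_nz field_simps split: sum.splits)
    show "\<exists>x\<in>((UNIV \<times> UNIV \<times> (UNIV - {0})) <+> (UNIV \<times> (UNIV - {0}))). \<exists>c. c \<noteq> 0 \<and> g x = (\<lambda>i. c * v i)"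
      if v: "v \<in> vecs5" "v \<noteq> (\<lambda>_. 0)" "FQ lam v" for v
    proof -
      obtain x1 x2 x3 x4 x5 where ve: "v = vec5 x1 x2 x3 x4 x5" using vec5_cases[OF v(1)] by blast
      have c: "x1 \<noteq> 0" "x2*x5+x3*x4 + lam*(x1*x1) = 0" using v ve by (auto simp: Fdefs qf_def power2_eq_square)
      show ?thesis
      proof (cases "x5 = 0")
        case True
        have x4: "x4 \<noteq> 0" using c True lam by auto
        have ee: "x3*x4 = -(lam*(x1*x1))" using c(2) True by (simp add: eq_neg_iff_add_eq_0)
        have e: "-lam/(x4/x1) = inverse x1 * x3" using x4 c(1) ee by (simp add: field_simps)
        have e2: "x2/x1 = inverse x1 * x2" "x4/x1 = inverse x1 * x4" by (simp_all add: field_simps)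
        show ?thesis unfolding ve using True c x4 e e2
          by (intro ex_scale[of "Inr (x2/x1, x4/x1)" _ "inverse x1"]) (simp_all add: g_def vec5_eq_iff Plus_def)
      next
        case False
        have ee: "x2*x5 = -(lam*(x1*x1) + x3*x4)" using c(2) by (simp add: eq_neg_iff_add_eq_0 algebra_simps)
        have "-(lam + x3/x1*(x4/x1))/(x5/x1) = (-(lam*(x1*x1) + x3*x4))/(x1*x5)" using False c(1) by (simp add: field_simps)
        also have "\<dots> = (x2*x5)/(x1*x5)" using ee by simp
        also have "\<dots> = inverse x1 * x2" using False c(1) by (simp add: field_simps)
        finally have e: "-(lam + x3/x1*(x4/x1))/(x5/x1) = inverse x1 * x2" .
        show ?thesis unfolding ve using False c e
          by (intro ex_scale[of "Inl (x3/x1, x4/x1, x5/x1)" _ "inverse x1"]) (simp_all add: g_def vec5_eq_iff Plus_def divide_inverse_commute)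
      qed
    qed
    show "\<And>x y c. x \<in> ((UNIV \<times> UNIV \<times> (UNIV - {0})) <+> (UNIV \<times> (UNIV - {0}))) \<Longrightarrow> y \<in> ((UNIV \<times> UNIV \<times> (UNIV - {0})) <+> (UNIV \<times> (UNIV - {0}))) \<Longrightarrow> c \<noteq> 0 \<Longrightarrow> g y = (\<lambda>i. c * g x i) \<Longrightarrow> x = y"
      by (auto simp: g_def vec5_scale vec5_eq_iff prod_eq_iff split: sum.splits)
  qed
  thus ?thesis using card_D by simp
qed


lemma neq_by: "hom F \<Longrightarrow> hom G \<Longrightarrow> \<not> (x1 = 0 \<and> x2 = 0 \<and> x3 = 0 \<and> x4 = 0 \<and> x5 = 0) \<Longrightarrow>
  F (vec5 x1 x2 x3 x4 x5) \<Longrightarrow> \<not> G (vec5 x1 x2 x3 x4 x5) \<Longrightarrow> pts_where F \<noteq> pts_where (G :: (nat \<Rightarrow> 'a::field) \<Rightarrow> bool)"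
  by (rule pts_neq) (simp_all add: vec5_nz)

lemma arith3: "(q::nat) * (q * (q - 1)) + q * (q - 1) = q^3 - q"
proof (cases q)
  case 0 thus ?thesis by simp
next
  case (Suc m)
  have "Suc m * (Suc m * m) + Suc m * m + Suc m = Suc m ^ 3"
    by (simp add: power3_eq_cube algebra_simps)
  thus ?thesis using Suc by simp
qed

theorem lemma3p1:
  fixes \<alpha> :: "'a::{field, finite}" and h q :: nat
  assumes "q = 2 ^ h" and "CARD('a) = q"
    and "irreducible [:\<alpha>, 1, 1:]"
  shows "orbits (Ggrp \<alpha>) =
           {{ptN}, line_l, plane_pi - (line_l \<union> {ptN}), quadric_H - line_l,
            solid_Sigma - quadric_H, cone_C - (plane_pi \<union> quadric_H)}
           \<union> {quadric_Q lam - quadric_H | lam. lam \<noteq> 0}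
       \<and> card (orbits (Ggrp \<alpha>)) = q + 5
       \<and> card {quadric_Q lam - quadric_H | lam. lam \<noteq> (0::'a)} = q - 1
       \<and> card (line_l :: (nat \<Rightarrow> 'a) set set) = q + 1
       \<and> card (plane_pi - (line_l \<union> {ptN}) :: (nat \<Rightarrow> 'a) set set) = q^2 - 1
       \<and> card (quadric_H - line_l :: (nat \<Rightarrow> 'a) set set) = q^2 + q
       \<and> card (solid_Sigma - quadric_H :: (nat \<Rightarrow> 'a) set set) = q^3 - q
       \<and> card (cone_C - (plane_pi \<union> quadric_H) :: (nat \<Rightarrow> 'a) set set) = q^3 - q
       \<and> (\<forall>lam::'a. lam \<noteq> 0 \<longrightarrow> card (quadric_Q lam - quadric_H) = q^3 - q)"
proof -
  have two: "(2::'a) = 0" using char2[of h] assms(1,2) by simp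
  note irr = assms(3)
  have "0 < CARD('a)" by (rule finite_UNIV_card_ge_0) simp
  hence q0: "0 < q" using assms(2) by simp
  have ar: "q * (q * (q - 1)) + q * (q - 1) = q^3 - q" by (rule arith3)
  define S6 where "S6 = {pts_where FN, pts_where Fl, pts_where Fpi, pts_where FH, pts_where FS, (pts_where FC :: (nat \<Rightarrow> 'a) set set)}"
  define Fam where "Fam = {pts_where (FQ lam) | lam::'a. lam \<noteq> 0}"
  have famimg: "Fam = (\<lambda>lam. pts_where (FQ lam)) ` (UNIV - {0::'a})" unfolding Fam_def by auto
  have inj: "inj_on (\<lambda>lam. pts_where (FQ lam)) (UNIV - {0::'a})"
  proof (rule inj_onI)
    fix l1 l2 :: 'a assume l: "l1 \<in> UNIV - {0}" "l2 \<in> UNIV - {0}" "pts_where (FQ l1) = pts_where (FQ l2)"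
    show "l1 = l2"
    proof (rule ccontr)
      assume "l1 \<noteq> l2"
      hence "pts_where (FQ l1) \<noteq> pts_where (FQ l2)"
        by (intro neq_by[OF hom_FQ hom_FQ, of 1 0 "-l1" 1 0]) (simp_all add: Fdefs qf_def)
      thus False using l(3) by simp
    qed
  qed
  have cfam: "card Fam = q - 1" unfolding famimg card_image[OF inj]
    using assms(2) by (simp add: card_Diff_singleton)
  have d: True by simp
  have "pts_where FN \<noteq> (pts_where Fl :: (nat \<Rightarrow> 'a) set set)"
    by (rule neq_by[OF hom_F(1) hom_F(2), of 1 0 0 0 0]) (simp_all add: Fdefs z45_def z2345_def qf_def)
  note d = d this
  have "pts_where FN \<noteq> (pts_where Fpi :: (nat \<Rightarrow> 'a) set set)"
    by (rule neq_by[OF hom_F(1) hom_F(3), of 1 0 0 0 0]) (simp_all add: Fdefs z45_def z2345_def qf_def)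
  note d = d this
  have "pts_where FN \<noteq> (pts_where FH :: (nat \<Rightarrow> 'a) set set)"
    by (rule neq_by[OF hom_F(1) hom_F(4), of 1 0 0 0 0]) (simp_all add: Fdefs z45_def z2345_def qf_def)
  note d = d this
  have "pts_where FN \<noteq> (pts_where FS :: (nat \<Rightarrow> 'a) set set)"
    by (rule neq_by[OF hom_F(1) hom_F(5), of 1 0 0 0 0]) (simp_all add: Fdefs z45_def z2345_def qf_def)
  note d = d this
  have "pts_where FN \<noteq> (pts_where FC :: (nat \<Rightarrow> 'a) set set)"
    by (rule neq_by[OF hom_F(1) hom_F(6), of 1 0 0 0 0]) (simp_all add: Fdefs z45_def z2345_def qf_def)
  note d = d this
  have "pts_where Fl \<noteq> (pts_where Fpi :: (nat \<Rightarrow> 'a) set set)"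
    by (rule neq_by[OF hom_F(2) hom_F(3), of 0 1 0 0 0]) (simp_all add: Fdefs z45_def z2345_def qf_def)
  note d = d this
  have "pts_where Fl \<noteq> (pts_where FH :: (nat \<Rightarrow> 'a) set set)"
    by (rule neq_by[OF hom_F(2) hom_F(4), of 0 1 0 0 0]) (simp_all add: Fdefs z45_def z2345_def qf_def)
  note d = d this
  have "pts_where Fl \<noteq> (pts_where FS :: (nat \<Rightarrow> 'a) set set)"
    by (rule neq_by[OF hom_F(2) hom_F(5), of 0 1 0 0 0]) (simp_all add: Fdefs z45_def z2345_def qf_def)
  note d = d this
  have "pts_where Fl \<noteq> (pts_where FC :: (nat \<Rightarrow> 'a) set set)"
    by (rule neq_by[OF hom_F(2) hom_F(6), of 0 1 0 0 0]) (simp_all add: Fdefs z45_def z2345_def qf_def)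
  note d = d this
  have "pts_where Fpi \<noteq> (pts_where FH :: (nat \<Rightarrow> 'a) set set)"
    by (rule neq_by[OF hom_F(3) hom_F(4), of 1 1 0 0 0]) (simp_all add: Fdefs z45_def z2345_def qf_def)
  note d = d this
  have "pts_where Fpi \<noteq> (pts_where FS :: (nat \<Rightarrow> 'a) set set)"
    by (rule neq_by[OF hom_F(3) hom_F(5), of 1 1 0 0 0]) (simp_all add: Fdefs z45_def z2345_def qf_def)
  note d = d this
  have "pts_where Fpi \<noteq> (pts_where FC :: (nat \<Rightarrow> 'a) set set)"
    by (rule neq_by[OF hom_F(3) hom_F(6), of 1 1 0 0 0]) (simp_all add: Fdefs z45_def z2345_def qf_def)
  note d = d this
  have "pts_where FH \<noteq> (pts_where FS :: (nat \<Rightarrow> 'a) set set)"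
    by (rule neq_by[OF hom_F(4) hom_F(5), of 0 0 0 1 0]) (simp_all add: Fdefs z45_def z2345_def qf_def)
  note d = d this
  have "pts_where FH \<noteq> (pts_where FC :: (nat \<Rightarrow> 'a) set set)"
    by (rule neq_by[OF hom_F(4) hom_F(6), of 0 0 0 1 0]) (simp_all add: Fdefs z45_def z2345_def qf_def)
  note d = d this
  have "pts_where FS \<noteq> (pts_where FC :: (nat \<Rightarrow> 'a) set set)"
    by (rule neq_by[OF hom_F(5) hom_F(6), of 0 0 1 1 0]) (simp_all add: Fdefs z45_def z2345_def qf_def)
  note d = d this
  have c6: "card S6 = 6" unfolding S6_def using d by simp
  have e: True by simp
  have "lam \<noteq> 0 \<Longrightarrow> pts_where (FQ lam) \<noteq> (pts_where FN :: (nat \<Rightarrow> 'a) set set)" for lam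
    by (rule neq_by[OF hom_FQ hom_F(1), of 1 0 "-lam" 1 0]) (simp_all add: Fdefs z45_def z2345_def qf_def)
  note e = e this
  have "lam \<noteq> 0 \<Longrightarrow> pts_where (FQ lam) \<noteq> (pts_where Fl :: (nat \<Rightarrow> 'a) set set)" for lam
    by (rule neq_by[OF hom_FQ hom_F(2), of 1 0 "-lam" 1 0]) (simp_all add: Fdefs z45_def z2345_def qf_def)
  note e = e this
  have "lam \<noteq> 0 \<Longrightarrow> pts_where (FQ lam) \<noteq> (pts_where Fpi :: (nat \<Rightarrow> 'a) set set)" for lam
    by (rule neq_by[OF hom_FQ hom_F(3), of 1 0 "-lam" 1 0]) (simp_all add: Fdefs z45_def z2345_def qf_def)
  note e = e this
  have "lam \<noteq> 0 \<Longrightarrow> pts_where (FQ lam) \<noteq> (pts_where FH :: (nat \<Rightarrow> 'a) set set)" for lam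
    by (rule neq_by[OF hom_FQ hom_F(4), of 1 0 "-lam" 1 0]) (simp_all add: Fdefs z45_def z2345_def qf_def)
  note e = e this
  have "lam \<noteq> 0 \<Longrightarrow> pts_where (FQ lam) \<noteq> (pts_where FS :: (nat \<Rightarrow> 'a) set set)" for lam
    by (rule neq_by[OF hom_FQ hom_F(5), of 1 0 "-lam" 1 0]) (simp_all add: Fdefs z45_def z2345_def qf_def)
  note e = e this
  have "lam \<noteq> 0 \<Longrightarrow> pts_where (FQ lam) \<noteq> (pts_where FC :: (nat \<Rightarrow> 'a) set set)" for lam
    by (rule neq_by[OF hom_FQ hom_F(6), of 1 0 "-lam" 1 0]) (simp_all add: Fdefs z45_def z2345_def qf_def)
  note e = e this
  have disj: "S6 \<inter> Fam = {}"
  proof (rule ccontr)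
    assume "S6 \<inter> Fam \<noteq> {}"
    then obtain lam where l: "lam \<noteq> 0" "pts_where (FQ lam) \<in> S6" unfolding Fam_def by blast
    from l(2) show False unfolding S6_def
      using e(2)[OF l(1)] e(3)[OF l(1)] e(4)[OF l(1)] e(5)[OF l(1)] e(6)[OF l(1)] e(7)[OF l(1)] by simp
  qed
  have fin: "finite Fam" unfolding famimg by simp
  have corb: "card (S6 \<union> Fam) = q + 5"
    using card_Un_disjoint[of S6 Fam] disj fin c6 cfam q0 by (simp add: S6_def)
  have orb: "orbits (Ggrp \<alpha>) = S6 \<union> Fam" unfolding S6_def Fam_def by (rule orbits_eq[OF two irr])
  show ?thesis
    unfolding L3 L4 L5 L6 L7
    unfolding L1 L2
    using orb corb cfam card_l[where 'a='a] card_pi[where 'a='a] card_H[where 'a='a] card_S[where 'a='a]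
      card_C[where 'a='a] card_Q[where 'a='a] ar assms(2)
    unfolding S6_def Fam_def
    by (simp add: power2_eq_square)
qed

end
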